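(* Let $k\ge 3$ and let $N_k^{gr}$ denote the algebra $N_k=\mathrm{span}\{I_k,E,E^2,\dots,E^{k-2},e_{12},\dots,e_{1k}\}\subseteq UT_k(F)$, $E=\sum_{i=1}^{k-1}e_{i,i+1}$, with the elementary grading induced by $(0,1,\dots,1)\in\mathbb{Z}_2^k$. Then $$C^{gr}(N_k^{gr})=\mathrm{Id}^{gr}(N_{k-1}^{gr})=\langle [y_1,y_2],\ [z,y_1,\dots,y_{k-2}],\ z_1z_2\rangle_{T_2}.$$
   Context: $F$ is a field of characteristic zero, $UT_k(F)$ the upper triangular $k\times k$ matrices with matrix units $e_{ij}$, $I_k$ the identity matrix. The elementary grading induced by $(g_1,\dots,g_k)$ makes $e_{ij}$ homogeneous of degree $g_j-g_i\in\mathbb{Z}_2$. A superalgebra is an algebra $A=A_0\oplus A_1$ with $A_iA_j\subseteq A_{i+j\bmod 2}$; $Z(A)$ is the center. $F\langle Y,Z\rangle$ is the free algebra on even variables $Y=\{y_1,y_2,\dots\}$ and odd variables $Z=\{z,z_1,z_2,\dots\}$. $\mathrm{Id}^{gr}(A)$ is the set of graded identities; $C^{gr}(A)$ the set of central graded polynomials (zero constant term, all evaluations with even variables in $A_0$ and odd in $A_1$ lie in $Z(A)$). $\langle S\rangle_{T_2}$ is the smallest ideal containing $S$ invariant under grading-preserving endomorphisms. Commutators are left-normed: $[a,b]=ab-ba$, $[a_1,\dots,a_m]=[[a_1,\dots,a_{m-1}],a_m]$. *)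

theory Defs
  imports Main
begin

text \<open>Variables: Yv i is the even variable y_i (i >= 1 used), Zv 0 is z, Zv i is z_i.\<close>
datatype var = Yv nat | Zv nat

text \<open>Noncommutative polynomials: finitely supported coefficient functions on words.\<close>
type_synonym 'a fpoly = "var list \<Rightarrow> 'a"

definition fsupp :: "'a::zero fpoly \<Rightarrow> var list set" where
  "fsupp p = {w. p w \<noteq> 0}"

definition fpolys :: "'a::zero fpoly set" where
  "fpolys = {p. finite (fsupp p)}"

definition fzero :: "'a::zero fpoly" where "fzero = (\<lambda>w. 0)"
definition fone :: "'a::{zero,one} fpoly" where "fone = (\<lambda>w. if w = [] then 1 else 0)"
definition fvar :: "var \<Rightarrow> 'a::{zero,one} fpoly" where
  "fvar x = (\<lambda>w. if w = [x] then 1 else 0)"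
definition fadd :: "'a::plus fpoly \<Rightarrow> 'a fpoly \<Rightarrow> 'a fpoly" where
  "fadd p q = (\<lambda>w. p w + q w)"
definition fsub :: "'a::minus fpoly \<Rightarrow> 'a fpoly \<Rightarrow> 'a fpoly" where
  "fsub p q = (\<lambda>w. p w - q w)"
definition fsmult :: "'a::times \<Rightarrow> 'a fpoly \<Rightarrow> 'a fpoly" where
  "fsmult c p = (\<lambda>w. c * p w)"
definition fmul :: "'a::comm_semiring_1 fpoly \<Rightarrow> 'a fpoly \<Rightarrow> 'a fpoly" where
  "fmul p q = (\<lambda>w. \<Sum>i\<le>length w. p (take i w) * q (drop i w))"

definition fcomm :: "'a::comm_ring_1 fpoly \<Rightarrow> 'a fpoly \<Rightarrow> 'a fpoly" where
  "fcomm p q = fsub (fmul p q) (fmul q p)"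

definition fcomm_list :: "'a::comm_ring_1 fpoly \<Rightarrow> 'a fpoly list \<Rightarrow> 'a fpoly" where
  "fcomm_list a as = foldl fcomm a as"

definition is_odd_var :: "var \<Rightarrow> bool" where
  "is_odd_var x = (case x of Yv _ \<Rightarrow> False | Zv _ \<Rightarrow> True)"

definition word_odd :: "var list \<Rightarrow> bool" where
  "word_odd w = odd (length (filter is_odd_var w))"

definition even_fpoly :: "'a::zero fpoly \<Rightarrow> bool" where
  "even_fpoly p = (\<forall>w. p w \<noteq> 0 \<longrightarrow> \<not> word_odd w)"
definition odd_fpoly :: "'a::zero fpoly \<Rightarrow> bool" where
  "odd_fpoly p = (\<forall>w. p w \<noteq> 0 \<longrightarrow> word_odd w)"

fun subst_word :: "(var \<Rightarrow> 'a::comm_semiring_1 fpoly) \<Rightarrow> var list \<Rightarrow> 'a fpoly" where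
  "subst_word \<sigma> [] = fone"
| "subst_word \<sigma> (x # w) = fmul (\<sigma> x) (subst_word \<sigma> w)"

definition fsubst :: "(var \<Rightarrow> 'a::comm_semiring_1 fpoly) \<Rightarrow> 'a fpoly \<Rightarrow> 'a fpoly" where
  "fsubst \<sigma> p = (\<lambda>u. \<Sum>w\<in>fsupp p. p w * subst_word \<sigma> w u)"

definition graded_subst :: "(var \<Rightarrow> 'a::comm_semiring_1 fpoly) \<Rightarrow> bool" where
  "graded_subst \<sigma> = (\<forall>x. \<sigma> x \<in> fpolys \<and>
      (if is_odd_var x then odd_fpoly (\<sigma> x) else even_fpoly (\<sigma> x)))"

definition T2_closed :: "'a::comm_ring_1 fpoly set \<Rightarrow> bool" where
  "T2_closed I = (I \<subseteq> fpolys \<and> fzero \<in> I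
     \<and> (\<forall>p\<in>I. \<forall>q\<in>I. fadd p q \<in> I)
     \<and> (\<forall>c. \<forall>p\<in>I. fsmult c p \<in> I)
     \<and> (\<forall>p\<in>I. \<forall>q\<in>fpolys. fmul q p \<in> I \<and> fmul p q \<in> I)
     \<and> (\<forall>\<sigma>. graded_subst \<sigma> \<longrightarrow> (\<forall>p\<in>I. fsubst \<sigma> p \<in> I)))"

definition T2_ideal :: "'a::comm_ring_1 fpoly set \<Rightarrow> 'a fpoly set" where
  "T2_ideal S = \<Inter>{I. S \<subseteq> I \<and> T2_closed I}"

section \<open>k x k matrices (indices 0..k-1) and the superalgebra N_k\<close>

type_synonym 'a mat = "nat \<Rightarrow> nat \<Rightarrow> 'a"

definition mmul :: "nat \<Rightarrow> 'a::comm_semiring_1 mat \<Rightarrow> 'a mat \<Rightarrow> 'a mat" where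
  "mmul k A B = (\<lambda>i j. if i < k \<and> j < k then (\<Sum>l<k. A i l * B l j) else 0)"

definition midt :: "nat \<Rightarrow> 'a::comm_semiring_1 mat" where
  "midt k = (\<lambda>i j. if i = j \<and> i < k then 1 else 0)"

text \<open>Matrix unit e_{i+1,j+1} (0-indexed).\<close>
definition munit :: "nat \<Rightarrow> nat \<Rightarrow> nat \<Rightarrow> 'a::comm_semiring_1 mat" where
  "munit k a b = (\<lambda>i j. if i = a \<and> j = b \<and> a < k \<and> b < k then 1 else 0)"

definition Emat :: "nat \<Rightarrow> 'a::comm_semiring_1 mat" where
  "Emat k = (\<lambda>i j. if j = Suc i \<and> j < k then 1 else 0)"

fun mpow :: "nat \<Rightarrow> 'a::comm_semiring_1 mat \<Rightarrow> nat \<Rightarrow> 'a mat" where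
  "mpow k A 0 = midt k"
| "mpow k A (Suc m) = mmul k A (mpow k A m)"

definition Nalg :: "nat \<Rightarrow> 'a::comm_semiring_1 mat set" where
  "Nalg k = {M. \<exists>a b. M = (\<lambda>i j. (\<Sum>m\<le>k-2. a m * mpow k (Emat k) m i j)
                              + (\<Sum>c\<in>{1..<k}. b c * munit k 0 c i j))}"

text \<open>Elementary grading induced by (0,1,...,1): position (i,j) (0-indexed) has
  degree g_j - g_i where g_0 = 0 and g_i = 1 for i >= 1.\<close>
definition even_pos :: "nat \<Rightarrow> nat \<Rightarrow> bool" where
  "even_pos i j = ((i = 0) = (j = 0))"

definition Neven :: "nat \<Rightarrow> 'a::comm_semiring_1 mat set" where
  "Neven k = {M \<in> Nalg k. \<forall>i j. \<not> even_pos i j \<longrightarrow> M i j = 0}"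
definition Nodd :: "nat \<Rightarrow> 'a::comm_semiring_1 mat set" where
  "Nodd k = {M \<in> Nalg k. \<forall>i j. even_pos i j \<longrightarrow> M i j = 0}"

definition Ncenter :: "nat \<Rightarrow> 'a::comm_semiring_1 mat set" where
  "Ncenter k = {C \<in> Nalg k. \<forall>A\<in>Nalg k. mmul k C A = mmul k A C}"

fun meval_word :: "nat \<Rightarrow> (var \<Rightarrow> 'a::comm_semiring_1 mat) \<Rightarrow> var list \<Rightarrow> 'a mat" where
  "meval_word k \<phi> [] = midt k"
| "meval_word k \<phi> (x # w) = mmul k (\<phi> x) (meval_word k \<phi> w)"

definition meval :: "nat \<Rightarrow> (var \<Rightarrow> 'a::comm_semiring_1 mat) \<Rightarrow> 'a fpoly \<Rightarrow> 'a mat" where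
  "meval k \<phi> p = (\<lambda>i j. \<Sum>w\<in>fsupp p. p w * meval_word k \<phi> w i j)"

definition graded_eval :: "nat \<Rightarrow> (var \<Rightarrow> 'a::comm_semiring_1 mat) \<Rightarrow> bool" where
  "graded_eval k \<phi> = (\<forall>i. \<phi> (Yv i) \<in> Neven k \<and> \<phi> (Zv i) \<in> Nodd k)"

definition IdN :: "nat \<Rightarrow> 'a::comm_semiring_1 fpoly set" where
  "IdN k = {p \<in> fpolys. \<forall>\<phi>. graded_eval k \<phi> \<longrightarrow> meval k \<phi> p = (\<lambda>i j. 0)}"

definition CN :: "nat \<Rightarrow> 'a::comm_semiring_1 fpoly set" where
  "CN k = {p \<in> fpolys. p [] = 0 \<and> (\<forall>\<phi>. graded_eval k \<phi> \<longrightarrow> meval k \<phi> p \<in> Ncenter k)}"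

end

theory Submission
  imports Defs "HOL-Library.Function_Algebras" "HOL-Computational_Algebra.Polynomial" "HOL-Library.Multiset"
begin

definition wd :: "var list \<Rightarrow> 'a::{zero,one} fpoly" where
  "wd w = (\<lambda>u. if u = w then 1 else 0)"

lemma sum_fun_apply: "(\<Sum>i\<in>A. f i) x = (\<Sum>i\<in>A. f i x)"
  by (induction A rule: infinite_finite_induct) auto

lemma fadd_eq: "fadd p q = p + q" by (auto simp: fadd_def)
lemma fsub_eq: "fsub p q = p - q" by (auto simp: fsub_def)
lemma fzero_eq: "fzero = 0" by (auto simp: fzero_def)
lemma fone_eq: "fone = wd []" by (auto simp: fone_def wd_def)
lemma fvar_eq: "fvar x = wd [x]" by (auto simp: fvar_def wd_def)

lemma fmul_Nil: "fmul p q [] = p [] * q []"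
  by (simp add: fmul_def)

lemma fmul_Cons: "fmul p q (a # w) = p [] * q (a # w) + fmul (\<lambda>u. p (a # u)) q w"
proof -
  have "fmul p q (a # w) = (\<Sum>i\<le>Suc (length w). p (take i (a#w)) * q (drop i (a#w)))"
    by (simp add: fmul_def)
  also have "\<dots> = p [] * q (a # w) + (\<Sum>i\<le>length w. p (take (Suc i) (a#w)) * q (drop (Suc i) (a#w)))"
    by (subst sum.atMost_Suc_shift) simp
  also have "\<dots> = p [] * q (a # w) + fmul (\<lambda>u. p (a # u)) q w"
    by (simp add: fmul_def)
  finally show ?thesis .
qed

lemma fmul_add_left: "fmul (p + p') q = fmul p q + fmul p' q"
  by (rule ext) (simp add: fmul_def sum.distrib algebra_simps)
lemma fmul_add_right: "fmul q (p + p') = fmul q p + fmul q p'"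
  by (rule ext) (simp add: fmul_def sum.distrib algebra_simps)
lemma fmul_diff_left: "fmul (p - p') (q::'a::comm_ring_1 fpoly) = fmul p q - fmul p' q"
  by (rule ext) (simp add: fmul_def sum_subtractf algebra_simps)
lemma fmul_diff_right: "fmul (q::'a::comm_ring_1 fpoly) (p - p') = fmul q p - fmul q p'"
  by (rule ext) (simp add: fmul_def sum_subtractf algebra_simps)
lemma fmul_zero_left[simp]: "fmul 0 q = 0"
  by (rule ext) (simp add: fmul_def)
lemma fmul_zero_right[simp]: "fmul q 0 = 0"
  by (rule ext) (simp add: fmul_def)
lemma fmul_add_left': "fmul (\<lambda>a. p a + p' a) q = (\<lambda>a. fmul p q a + fmul p' q a)"
  by (rule ext) (simp add: fmul_def sum.distrib algebra_simps)
lemma fmul_add_right': "fmul q (\<lambda>a. p a + p' a) = (\<lambda>a. fmul q p a + fmul q p' a)"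
  by (rule ext) (simp add: fmul_def sum.distrib algebra_simps)
lemma fmul_zero_left'[simp]: "fmul (\<lambda>a. 0) q = (\<lambda>a. 0)"
  by (rule ext) (simp add: fmul_def)
lemma fmul_zero_right'[simp]: "fmul q (\<lambda>a. 0) = (\<lambda>a. 0)"
  by (rule ext) (simp add: fmul_def)
lemma fmul_smult_left: "fmul (fsmult c p) q = fsmult c (fmul p q)"
  by (rule ext) (simp add: fmul_def fsmult_def sum_distrib_left algebra_simps)
lemma fmul_smult_right: "fmul q (fsmult c p) = fsmult c (fmul q p)"
  by (rule ext) (simp add: fmul_def fsmult_def sum_distrib_left algebra_simps)
lemma fmul_sum_left: "fmul (\<Sum>i\<in>A. f i) q = (\<Sum>i\<in>A. fmul (f i) q)"
  by (induction A rule: infinite_finite_induct) (simp_all add: fmul_add_left')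
lemma fmul_sum_right: "fmul q (\<Sum>i\<in>A. f i) = (\<Sum>i\<in>A. fmul q (f i))"
  by (induction A rule: infinite_finite_induct) (simp_all add: fmul_add_right')
lemma fmul_sum_list_left: "fmul (sum_list (map f xs)) q = sum_list (map (\<lambda>i. fmul (f i) q) xs)"
  by (induction xs) (simp_all only: list.map sum_list.Cons sum_list.Nil fmul_add_left fmul_zero_left)
lemma fmul_sum_list_right: "fmul q (sum_list (map f xs)) = sum_list (map (\<lambda>i. fmul q (f i)) xs)"
  by (induction xs) (simp_all only: list.map sum_list.Cons sum_list.Nil fmul_add_right fmul_zero_right)

lemma fmul_assoc: "fmul (fmul p q) r = fmul p (fmul q r)"
proof (rule ext)
  fix w show "fmul (fmul p q) r w = fmul p (fmul q r) w"
  proof (induction w arbitrary: p)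
    case Nil
    then show ?case by (simp add: fmul_Nil mult.assoc)
  next
    case (Cons a w)
    have D: "(\<lambda>u. fmul p q (a # u)) = fsmult (p []) (\<lambda>u. q (a # u)) + fmul (\<lambda>u. p (a # u)) q"
      by (rule ext) (simp add: fmul_Cons fsmult_def)
    have "fmul (fmul p q) r (a # w) = fmul p q [] * r (a # w) + fmul (\<lambda>u. fmul p q (a # u)) r w"
      by (simp add: fmul_Cons)
    also have "\<dots> = p [] * q [] * r (a # w) + p [] * fmul (\<lambda>u. q (a # u)) r w
        + fmul (fmul (\<lambda>u. p (a # u)) q) r w"
      by (simp add: D fmul_add_left fmul_smult_left fmul_Nil) (simp add: fsmult_def add.assoc)
    also have "\<dots> = fmul p (fmul q r) (a # w)"
      by (simp add: Cons.IH fmul_Cons algebra_simps fsmult_def)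
    finally show ?case .
  qed
qed

lemma fmul_fone_left[simp]: "fmul fone q = q"
proof (rule ext)
  fix w show "fmul fone q w = q w"
    by (cases w) (simp_all add: fmul_Nil fmul_Cons fone_def)
qed

lemma fmul_fone_right[simp]: "fmul q fone = q"
proof (rule ext)
  fix w show "fmul q fone w = q w"
    by (induction w arbitrary: q) (simp_all add: fmul_Nil fmul_Cons fone_def)
qed

lemma fmul_fvar: "fmul (fvar x) q = (\<lambda>w. case w of [] \<Rightarrow> 0 | b # w' \<Rightarrow> if b = x then q w' else 0)"
proof (rule ext)
  fix w show "fmul (fvar x) q w = (case w of [] \<Rightarrow> 0 | b # w' \<Rightarrow> if b = x then q w' else 0)"
  proof (cases w)
    case (Cons b w')
    have "(\<lambda>u. fvar x (b # u)) = (if b = x then fone else 0)"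
      by (rule ext) (auto simp: fvar_def fone_def)
    then have "fmul (\<lambda>u. fvar x (b # u)) q = fmul (if b = x then fone else 0) q" by (rule arg_cong)
    moreover have "fvar x [] = 0" by (simp add: fvar_def)
    ultimately show ?thesis using Cons by (cases "b = x") (simp_all add: fmul_Cons, simp_all add: fvar_def)
  qed (simp add: fmul_Nil fvar_def)
qed

lemma wd_Cons: "wd (x # w) = fmul (fvar x) (wd w)"
  by (rule ext) (auto simp: fmul_fvar wd_def split: list.split)

lemma wd_Nil: "wd [] = fone"
  by (simp add: fone_eq)

lemma wd_append: "wd (u @ v) = fmul (wd u) (wd v)"
  by (induction u) (simp_all add: wd_Nil wd_Cons fmul_assoc)

lemma fsupp_fmul: "fsupp (fmul p q) \<subseteq> (\<lambda>(u,v). u @ v) ` (fsupp p \<times> fsupp q)"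
proof
  fix w assume "w \<in> fsupp (fmul p q)"
  then have "(\<Sum>i\<le>length w. p (take i w) * q (drop i w)) \<noteq> 0"
    by (simp add: fsupp_def fmul_def)
  then obtain i where "p (take i w) * q (drop i w) \<noteq> 0"
    using sum.neutral by force
  then have "take i w \<in> fsupp p" "drop i w \<in> fsupp q" by (auto simp: fsupp_def)
  then show "w \<in> (\<lambda>(u,v). u @ v) ` (fsupp p \<times> fsupp q)"
    by (intro image_eqI[of _ _ "(take i w, drop i w)"]) auto
qed

lemma fpolys_fmul[intro]: "p \<in> fpolys \<Longrightarrow> q \<in> fpolys \<Longrightarrow> fmul p q \<in> fpolys"
  unfolding fpolys_def by simp (rule finite_subset[OF fsupp_fmul], auto)

lemma fpolys_add[intro]: "p \<in> fpolys \<Longrightarrow> q \<in> fpolys \<Longrightarrow> (p::'a::monoid_add fpoly) + q \<in> fpolys"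
  unfolding fpolys_def fsupp_def
  by simp (rule finite_subset[of _ "{w. p w \<noteq> 0} \<union> {w. q w \<noteq> 0}"], auto)

lemma fpolys_diff[intro]: "p \<in> fpolys \<Longrightarrow> q \<in> fpolys \<Longrightarrow> (p::'a::ab_group_add fpoly) - q \<in> fpolys"
  unfolding fpolys_def fsupp_def
  by simp (rule finite_subset[of _ "{w. p w \<noteq> 0} \<union> {w. q w \<noteq> 0}"], auto)

lemma fpolys_smult[intro]: "p \<in> fpolys \<Longrightarrow> fsmult c (p::'a::mult_zero fpoly) \<in> fpolys"
  unfolding fpolys_def fsupp_def fsmult_def
  by simp (rule finite_subset[of _ "{w. p w \<noteq> 0}"], auto)

lemma fpolys_zero[intro,simp]: "0 \<in> fpolys"
  by (simp add: fpolys_def fsupp_def)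

lemma fpolys_sum[intro]: "(\<And>i. i \<in> A \<Longrightarrow> f i \<in> fpolys) \<Longrightarrow> sum f A \<in> fpolys"
  by (induction A rule: infinite_finite_induct) auto

lemma fpolys_sum_list[intro]: "(\<And>i. i \<in> set xs \<Longrightarrow> f i \<in> fpolys) \<Longrightarrow> sum_list (map f xs) \<in> fpolys"
  by (induction xs) auto

lemma fpolys_wd[intro,simp]: "wd w \<in> fpolys"
  by (simp add: fpolys_def fsupp_def wd_def)

lemma fpolys_fone[intro,simp]: "fone \<in> fpolys"
  by (simp add: fone_eq)

lemma fpolys_fvar[intro,simp]: "fvar x \<in> fpolys"
  by (simp add: fvar_eq)

lemma fpolys_fcomm[intro]: "p \<in> fpolys \<Longrightarrow> q \<in> fpolys \<Longrightarrow> fcomm p q \<in> fpolys"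
  by (auto simp: fcomm_def fsub_eq)

lemma fpolys_fcomm_list[intro]: "p \<in> fpolys \<Longrightarrow> set qs \<subseteq> fpolys \<Longrightarrow> fcomm_list p qs \<in> fpolys"
  unfolding fcomm_list_def by (induction qs arbitrary: p) auto

lemma fpoly_repr:
  fixes p :: "'a::comm_semiring_1 fpoly"
  assumes "p \<in> fpolys"
  shows "p = (\<Sum>w\<in>fsupp p. fsmult (p w) (wd w))"
proof (rule ext)
  fix u
  have "(\<Sum>w\<in>fsupp p. fsmult (p w) (wd w)) u = (\<Sum>w\<in>fsupp p. if w = u then p w else 0)"
    unfolding sum_fun_apply fsmult_def wd_def by (intro sum.cong) auto
  also have "\<dots> = p u"
    using assms by (simp add: fpolys_def sum.delta') (simp add: fsupp_def)
  finally show "p u = (\<Sum>w\<in>fsupp p. fsmult (p w) (wd w)) u" by simp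
qed

definition linE :: "(var list \<Rightarrow> 'b \<Rightarrow> 'a::comm_semiring_1) \<Rightarrow> 'a fpoly \<Rightarrow> 'b \<Rightarrow> 'a" where
  "linE G p = (\<lambda>x. \<Sum>w\<in>fsupp p. p w * G w x)"

lemma linE_superset:
  assumes "finite A" "fsupp p \<subseteq> A"
  shows "linE G p x = (\<Sum>w\<in>A. p w * G w x)"
  unfolding linE_def using assms
  by (intro sum.mono_neutral_left) (auto simp: fsupp_def)

lemma fsupp_add: "fsupp (p + q) \<subseteq> fsupp p \<union> fsupp (q::'a::monoid_add fpoly)"
  by (auto simp: fsupp_def)
lemma fsupp_diff: "fsupp (p - q) \<subseteq> fsupp p \<union> fsupp (q::'a::ab_group_add fpoly)"
  by (auto simp: fsupp_def)
lemma fsupp_smult: "fsupp (fsmult c p) \<subseteq> fsupp (p::'a::mult_zero fpoly)"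
  by (auto simp: fsupp_def fsmult_def)

lemma fin_fsupp: "p \<in> fpolys \<Longrightarrow> finite (fsupp p)"
  by (simp add: fpolys_def)

lemma linE_add:
  assumes "p \<in> fpolys" "q \<in> fpolys"
  shows "linE G (p + q) x = linE G p x + linE G q x"
proof -
  have f: "finite (fsupp p \<union> fsupp q)" using assms by (simp add: fin_fsupp)
  show ?thesis
    using linE_superset[OF f fsupp_add, where G=G and x=x] linE_superset[OF f, of p G x]
      linE_superset[OF f, of q G x]
    by (simp add: sum.distrib algebra_simps)
qed

lemma linE_diff:
  fixes p q :: "'a::comm_ring_1 fpoly"
  assumes "p \<in> fpolys" "q \<in> fpolys"
  shows "linE G (p - q) x = linE G p x - linE G q x"
proof -
  have f: "finite (fsupp p \<union> fsupp q)" using assms by (simp add: fin_fsupp)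
  show ?thesis
    using linE_superset[OF f fsupp_diff, where G=G and x=x] linE_superset[OF f, of p G x]
      linE_superset[OF f, of q G x]
    by (simp add: sum_subtractf algebra_simps)
qed

lemma linE_smult:
  assumes "p \<in> fpolys"
  shows "linE G (fsmult c p) x = c * linE G p x"
  using linE_superset[OF fin_fsupp[OF assms] fsupp_smult, where G=G and x=x]
  by (simp add: linE_def fsmult_def sum_distrib_left algebra_simps)

lemma linE_zero[simp]: "linE G 0 x = 0"
  by (simp add: linE_def fsupp_def)

lemma linE_wd: "linE G (wd w) x = G w x"
proof -
  have "fsupp (wd w :: 'a fpoly) = {w}" by (auto simp: fsupp_def wd_def)
  then show ?thesis by (simp add: linE_def wd_def)
qed

lemma linE_sum:
  assumes "finite A" "\<And>i. i \<in> A \<Longrightarrow> f i \<in> fpolys"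
  shows "linE G (\<Sum>i\<in>A. f i) x = (\<Sum>i\<in>A. linE G (f i) x)"
  using assms
proof (induction A rule: finite_induct)
  case (insert a F)
  have "linE G (sum f (insert a F)) x = linE G (f a + sum f F) x" using insert by simp
  also have "\<dots> = linE G (f a) x + linE G (sum f F) x"
    by (rule linE_add) (auto intro!: fpolys_sum insert.prems)
  also have "\<dots> = (\<Sum>i\<in>insert a F. linE G (f i) x)" using insert by simp
  finally show ?case .
qed simp

lemma fsmult_fsmult: "fsmult a (fsmult b p) = fsmult (a * b) (p::'a::comm_semiring_1 fpoly)"
  by (rule ext) (simp add: fsmult_def mult.assoc)

lemma fmul_sums:
  fixes a b :: "_ \<Rightarrow> 'a::comm_semiring_1"
  shows "fmul (\<Sum>u\<in>A. fsmult (a u) (X u)) (\<Sum>v\<in>B. fsmult (b v) (Y v))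
    = (\<Sum>u\<in>A. \<Sum>v\<in>B. fsmult (a u * b v) (fmul (X u) (Y v)))"
  unfolding fmul_sum_left
  unfolding fmul_sum_right fmul_smult_left fmul_smult_right fsmult_fsmult
  by (simp add: mult.commute)

lemma fmul_repr:
  fixes p q :: "'a::comm_semiring_1 fpoly"
  assumes "p \<in> fpolys" "q \<in> fpolys"
  shows "fmul p q = (\<Sum>u\<in>fsupp p. \<Sum>v\<in>fsupp q. fsmult (p u * q v) (wd (u @ v)))"
proof -
  have "fmul p q = fmul (\<Sum>u\<in>fsupp p. fsmult (p u) (wd u)) (\<Sum>v\<in>fsupp q. fsmult (q v) (wd v))"
    using fpoly_repr[OF assms(1)] fpoly_repr[OF assms(2)] by simp
  also have "\<dots> = (\<Sum>u\<in>fsupp p. \<Sum>v\<in>fsupp q. fsmult (p u * q v) (wd (u @ v)))"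
    by (simp only: fmul_sums wd_append)
  finally show ?thesis .
qed

lemma linE_fmul:
  assumes "p \<in> fpolys" "q \<in> fpolys"
  shows "linE G (fmul p q) x = (\<Sum>u\<in>fsupp p. \<Sum>v\<in>fsupp q. p u * q v * G (u @ v) x)"
  using assms
  by (simp add: fmul_repr linE_sum fin_fsupp fpolys_sum fpolys_smult linE_smult linE_wd)

lemma fsubst_linE: "fsubst \<sigma> p = linE (subst_word \<sigma>) p"
  by (simp add: fsubst_def linE_def)

lemma subst_word_append: "subst_word \<sigma> (u @ v) = fmul (subst_word \<sigma> u) (subst_word \<sigma> v)"
  by (induction u) (simp_all add: fmul_assoc)

lemma fpolys_subst_word: "(\<And>x. \<sigma> x \<in> fpolys) \<Longrightarrow> subst_word \<sigma> w \<in> fpolys"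
  by (induction w) auto

lemma fsubst_repr: "fsubst \<sigma> p = (\<Sum>u\<in>fsupp p. fsmult (p u) (subst_word \<sigma> u))"
  by (rule ext) (simp add: fsubst_def sum_fun_apply fsmult_def)

lemma fpolys_fsubst: "(\<And>x. \<sigma> x \<in> fpolys) \<Longrightarrow> fsubst \<sigma> p \<in> fpolys"
  unfolding fsubst_repr by (intro fpolys_sum fpolys_smult fpolys_subst_word)

lemma fsubst_fmul:
  assumes "p \<in> fpolys" "q \<in> fpolys"
  shows "fsubst \<sigma> (fmul p q) = fmul (fsubst \<sigma> p) (fsubst \<sigma> q)"
proof (rule ext)
  fix x
  have "fsubst \<sigma> (fmul p q) x = (\<Sum>u\<in>fsupp p. \<Sum>v\<in>fsupp q. p u * q v * subst_word \<sigma> (u @ v) x)"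
    by (simp add: fsubst_linE linE_fmul assms)
  also have "\<dots> = (\<Sum>u\<in>fsupp p. \<Sum>v\<in>fsupp q. fsmult (p u * q v) (fmul (subst_word \<sigma> u) (subst_word \<sigma> v))) x"
    by (simp add: sum_fun_apply fsmult_def subst_word_append)
  also have "\<dots> = fmul (fsubst \<sigma> p) (fsubst \<sigma> q) x"
    by (simp only: fsubst_repr fmul_sums)
  finally show "fsubst \<sigma> (fmul p q) x = fmul (fsubst \<sigma> p) (fsubst \<sigma> q) x" .
qed

lemma fsubst_wd: "fsubst \<sigma> (wd w) = subst_word \<sigma> w"
  by (rule ext) (simp add: fsubst_linE linE_wd)

lemma fsubst_fvar: "fsubst \<sigma> (fvar x) = \<sigma> x"
  by (simp add: fvar_eq fsubst_wd)

lemma fsubst_diff: "(p::'a::comm_ring_1 fpoly) \<in> fpolys \<Longrightarrow> q \<in> fpolys \<Longrightarrow> q \<in> fpolys \<Longrightarrow> fsubst \<sigma> (p - q) = fsubst \<sigma> p - fsubst \<sigma> q"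
  by (rule ext) (simp add: fsubst_linE linE_diff)

lemma fsubst_fcomm: "(p::'a::comm_ring_1 fpoly) \<in> fpolys \<Longrightarrow> q \<in> fpolys \<Longrightarrow> q \<in> fpolys \<Longrightarrow> fsubst \<sigma> (fcomm p q) = fcomm (fsubst \<sigma> p) (fsubst \<sigma> q)"
  by (simp add: fcomm_def fsub_eq fsubst_diff fsubst_fmul fpolys_fmul)

lemma fsubst_fcomm_list:
  "(p::'a::comm_ring_1 fpoly) \<in> fpolys \<Longrightarrow> set qs \<subseteq> fpolys \<Longrightarrow>
   fsubst \<sigma> (fcomm_list p qs) = fcomm_list (fsubst \<sigma> p) (map (fsubst \<sigma>) qs)"
  unfolding fcomm_list_def
  by (induction qs arbitrary: p) (auto simp: fsubst_fcomm fpolys_fcomm)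


definition evenM :: "nat \<Rightarrow> 'a::comm_semiring_1 poly \<Rightarrow> 'a mat" where
  "evenM m P = (\<lambda>i j. if i = 0 \<and> j = 0 then coeff P 0
      else if 1 \<le> i \<and> i \<le> j \<and> j < m then coeff P (j - i) else 0)"

definition oddM :: "nat \<Rightarrow> 'a::comm_semiring_1 poly \<Rightarrow> 'a mat" where
  "oddM m Q = (\<lambda>i j. if i = 0 \<and> 1 \<le> j \<and> j < m then coeff Q (j - 1) else 0)"

definition topM :: "nat \<Rightarrow> 'a::comm_semiring_1 \<Rightarrow> 'a mat" where
  "topM m c = (\<lambda>i j. if i = 0 \<and> j = m - 1 then c else 0)"

lemma sum_single:
  fixes m :: nat
  assumes "l0 < m" "\<And>l. l < m \<Longrightarrow> l \<noteq> l0 \<Longrightarrow> f l = 0"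
  shows "(\<Sum>l<m. f l) = (f l0 :: 'a::comm_monoid_add)"
proof -
  have "(\<Sum>l<m. f l) = (\<Sum>l<m. if l = l0 then f l0 else 0)"
    using assms by (intro sum.cong) auto
  also have "\<dots> = f l0" using assms(1) by (simp add: sum.delta)
  finally show ?thesis .
qed

lemma sum_zero_all: "(\<And>l. l < (m::nat) \<Longrightarrow> f l = 0) \<Longrightarrow> (\<Sum>l<m. f l) = 0"
  by simp

lemma sum_interval_reindex:
  fixes m :: nat
  assumes "i \<le> j" "j < m"
  shows "(\<Sum>l<m. if i \<le> l \<and> l \<le> j then g (l - i) else (0::'a::comm_monoid_add))
       = (\<Sum>e\<le>j - i. g e)"
proof -
  have "(\<Sum>l<m. if i \<le> l \<and> l \<le> j then g (l - i) else 0) = (\<Sum>l\<in>{i..j}. g (l - i))"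
  proof -
    have "{l\<in>{..<m}. i \<le> l \<and> l \<le> j} = {i..j}" using assms by auto
    then show ?thesis by (simp add: sum.inter_filter[symmetric])
  qed
  also have "\<dots> = (\<Sum>e\<in>{0..j-i}. g e)"
    using assms by (intro sum.reindex_bij_witness[of _ "\<lambda>e. e + i" "\<lambda>l. l - i"]) auto
  finally show ?thesis by (simp add: atLeast0AtMost)
qed

lemma mmul_zero_entry:
  "(\<And>l. l < m \<Longrightarrow> A i l * B l j = 0) \<Longrightarrow> mmul m A B i j = 0"
  by (simp add: mmul_def)

lemma mmul_even_even:
  assumes "m \<ge> 1"
  shows "mmul m (evenM m P) (evenM m P') = evenM m (P * P')"
proof (intro ext)
  fix i j
  show "mmul m (evenM m P) (evenM m P') i j = evenM m (P * P') i j"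
  proof (cases "i < m \<and> j < m")
    case False then show ?thesis using assms by (auto simp: mmul_def evenM_def)
  next
    case True
    show ?thesis
    proof (cases "i = 0")
      case i0: True
      have "mmul m (evenM m P) (evenM m P') i j = evenM m P 0 0 * evenM m P' 0 j"
        using True i0 assms unfolding mmul_def by (simp, intro sum_single) (auto simp: evenM_def)
      then show ?thesis using i0 by (auto simp: evenM_def coeff_mult)
    next
      case i1: False
      show ?thesis
      proof (cases "i \<le> j")
        case False
        then show ?thesis using True i1 unfolding mmul_def
          by (simp add: evenM_def, intro sum_zero_all) auto
      next
        case ij: True
        have "mmul m (evenM m P) (evenM m P') i j
            = (\<Sum>l<m. if i \<le> l \<and> l \<le> j then coeff P (l - i) * coeff P' (j - i - (l - i)) else 0)"
          using True i1 ij unfolding mmul_def evenM_def by (auto intro!: sum.cong)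
        also have "\<dots> = coeff (P * P') (j - i)"
          using True ij by (subst sum_interval_reindex) (auto simp: coeff_mult)
        finally show ?thesis using i1 ij True by (simp add: evenM_def)
      qed
    qed
  qed
qed

lemma mmul_even_odd:
  assumes "m \<ge> 1"
  shows "mmul m (evenM m P) (oddM m Q) = oddM m (smult (coeff P 0) Q)"
proof (intro ext)
  fix i j
  show "mmul m (evenM m P) (oddM m Q) i j = oddM m (smult (coeff P 0) Q) i j"
  proof (cases "i < m \<and> j < m")
    case False then show ?thesis using assms by (auto simp: mmul_def oddM_def)
  next
    case True
    show ?thesis
    proof (cases "i = 0")
      case i0: True
      have "mmul m (evenM m P) (oddM m Q) i j = evenM m P 0 0 * oddM m Q 0 j"
        using True i0 assms unfolding mmul_def by (simp, intro sum_single) (auto simp: evenM_def)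
      then show ?thesis using i0 by (auto simp: evenM_def oddM_def)
    next
      case False
      then show ?thesis using True unfolding mmul_def
        by (simp add: oddM_def, intro sum_zero_all) (auto simp: evenM_def)
    qed
  qed
qed

lemma mmul_odd_even:
  assumes "m \<ge> 1"
  shows "mmul m (oddM m Q) (evenM m P) = oddM m (Q * P)"
proof (intro ext)
  fix i j
  show "mmul m (oddM m Q) (evenM m P) i j = oddM m (Q * P) i j"
  proof (cases "i = 0 \<and> 1 \<le> j \<and> j < m")
    case False
    have "mmul m (oddM m Q) (evenM m P) i j = 0"
      by (rule mmul_zero_entry) (use False in \<open>auto simp: evenM_def oddM_def\<close>)
    then show ?thesis using False by (auto simp: oddM_def)
  next
    case True
    have "mmul m (oddM m Q) (evenM m P) i j
        = (\<Sum>l<m. if 1 \<le> l \<and> l \<le> j then coeff Q (l - 1) * coeff P (j - 1 - (l - 1)) else 0)"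
      using True unfolding mmul_def oddM_def evenM_def by (auto intro!: sum.cong)
    also have "\<dots> = coeff (Q * P) (j - 1)"
      using True by (subst sum_interval_reindex) (auto simp: coeff_mult)
    finally show ?thesis using True by (simp add: oddM_def)
  qed
qed

lemma mmul_odd_odd: "mmul m (oddM m Q) (oddM m Q') = 0"
  by (intro ext) (simp add: mmul_def oddM_def, intro impI sum_zero_all, auto)

lemma midt_evenM: "m \<ge> 1 \<Longrightarrow> midt m = evenM m 1"
  by (intro ext) (auto simp: midt_def evenM_def coeff_1)

lemma mmul_zero_left[simp]: "mmul m 0 A = 0"
  by (intro ext) (simp add: mmul_def)
lemma mmul_zero_right[simp]: "mmul m A 0 = 0"
  by (intro ext) (simp add: mmul_def)

lemma mmul_add_left: "mmul m (A + B) C = mmul m A C + mmul m B C"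
  by (intro ext) (simp add: mmul_def sum.distrib algebra_simps)
lemma mmul_add_right: "mmul m C (A + B) = mmul m C A + mmul m C B"
  by (intro ext) (simp add: mmul_def sum.distrib algebra_simps)

lemma mmul_assoc: "mmul m (mmul m A B) C = mmul m A (mmul m B C)"
proof (intro ext)
  fix i j
  show "mmul m (mmul m A B) C i j = mmul m A (mmul m B C) i j"
  proof (cases "i < m \<and> j < m")
    case True
    then show ?thesis
      by (simp add: mmul_def sum_distrib_left sum_distrib_right mult.assoc) (rule sum.swap)
  qed (auto simp: mmul_def)
qed

definition msupp :: "nat \<Rightarrow> 'a::zero mat \<Rightarrow> bool" where
  "msupp m A = (\<forall>i j. \<not> (i < m \<and> j < m) \<longrightarrow> A i j = 0)"

lemma midt_left: "msupp m B \<Longrightarrow> mmul m (midt m) B = B"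
proof (intro ext)
  fix i j assume "msupp m B"
  then show "mmul m (midt m) B i j = B i j"
    unfolding mmul_def msupp_def
    by (cases "i < m \<and> j < m") (simp_all, subst sum_single[of i], auto simp: midt_def)
qed

lemma msupp_mmul: "msupp m (mmul m A B)"
  by (simp add: msupp_def mmul_def)

lemma msupp_midt: "msupp m (midt m)"
  by (simp add: msupp_def midt_def)

lemma evenM_add: "evenM m (P + P') = evenM m P + evenM m P'"
  by (intro ext) (simp add: evenM_def)
lemma oddM_add: "oddM m (P + P') = oddM m P + oddM m P'"
  by (intro ext) (simp add: oddM_def)
lemma evenM_0[simp]: "evenM m 0 = 0"
  by (intro ext) (simp add: evenM_def)
lemma oddM_0[simp]: "oddM m 0 = 0"
  by (intro ext) (simp add: oddM_def)

lemma mmul_even_top: "m \<ge> 2 \<Longrightarrow> mmul m (evenM m P) (topM m c) = topM m (coeff P 0 * c)"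
proof (intro ext)
  fix i j assume m: "m \<ge> 2"
  show "mmul m (evenM m P) (topM m c) i j = topM m (coeff P 0 * c) i j"
  proof (cases "i = 0 \<and> j = m - 1")
    case True
    then show ?thesis using m unfolding mmul_def
      by (simp add: topM_def, subst sum_single[of 0]) (auto simp: evenM_def)
  next
    case False
    have "mmul m (evenM m P) (topM m c) i j = 0"
      by (rule mmul_zero_entry) (use False m in \<open>auto simp: evenM_def topM_def\<close>)
    then show ?thesis using False by (auto simp: topM_def)
  qed
qed

lemma mmul_top_even: "m \<ge> 2 \<Longrightarrow> mmul m (topM m c) (evenM m P) = topM m (c * coeff P 0)"
proof (intro ext)
  fix i j assume m: "m \<ge> 2"
  show "mmul m (topM m c) (evenM m P) i j = topM m (c * coeff P 0) i j"
  proof (cases "i = 0 \<and> j = m - 1")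
    case True
    then show ?thesis using m unfolding mmul_def
      by (simp add: topM_def, subst sum_single[of "m - 1"]) (auto simp: evenM_def)
  next
    case False
    have "mmul m (topM m c) (evenM m P) i j = 0"
      by (rule mmul_zero_entry) (use False m in \<open>auto simp: evenM_def topM_def\<close>)
    then show ?thesis using False by (auto simp: topM_def)
  qed
qed

lemma mmul_odd_top: "m \<ge> 2 \<Longrightarrow> mmul m (oddM m Q) (topM m c) = 0"
  by (intro ext) (simp add: mmul_def, intro impI sum_zero_all, auto simp: oddM_def topM_def)

lemma mmul_top_odd: "m \<ge> 2 \<Longrightarrow> mmul m (topM m c) (oddM m Q) = 0"
  by (intro ext) (simp add: mmul_def, intro impI sum_zero_all, auto simp: oddM_def topM_def)

lemma mpow_E_aux: "\<forall>i j. (mpow m (Emat m) e i j :: 'a::comm_semiring_1) = (if j = i + e \<and> j < m then 1 else 0)"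
proof (induction e)
  case 0
  then show ?case by (auto simp: midt_def)
next
  case (Suc e)
  show ?case
  proof (intro allI)
    fix i j
    show "(mpow m (Emat m) (Suc e) i j :: 'a) = (if j = i + Suc e \<and> j < m then 1 else 0)"
    proof (cases "i < m \<and> j < m \<and> Suc i < m")
      case True
      have "(mpow m (Emat m) (Suc e) i j :: 'a) = (\<Sum>l<m. Emat m i l * mpow m (Emat m) e l j)"
        using True by (simp add: mmul_def)
      also have "\<dots> = (\<Sum>l<m. Emat m i l * (if j = l + e \<and> j < m then 1 else 0))"
        using Suc.IH by simp
      also have "\<dots> = (if j = i + Suc e \<and> j < m then 1 else 0)"
        using True by (subst sum_single[of "Suc i"]) (auto simp: Emat_def)
      finally show ?thesis .
    next
      case False
      have "(mpow m (Emat m) (Suc e) i j :: 'a) = mmul m (Emat m) (mpow m (Emat m) e) i j" by simp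
      also have "\<dots> = 0"
        by (rule mmul_zero_entry) (use False Suc.IH in \<open>auto simp: Emat_def\<close>)
      finally show ?thesis using False by auto
    qed
  qed
qed

lemma mpow_E: "mpow m (Emat m) e = (\<lambda>i j. if j = i + e \<and> j < m then 1 else 0)"
  using mpow_E_aux by blast

definition NA :: "nat \<Rightarrow> (nat \<Rightarrow> 'a::comm_semiring_1) \<Rightarrow> (nat \<Rightarrow> 'a) \<Rightarrow> 'a mat" where
  "NA m a b = (\<lambda>i j. (if i \<le> j \<and> j < m \<and> j - i \<le> m - 2 then a (j - i) else 0)
      + (if i = 0 \<and> 1 \<le> j \<and> j < m then b j else 0))"

lemma Nalg_NA: "Nalg m = {NA m a b | a b. True}"
proof -
  have eq: "(\<lambda>i j. (\<Sum>e\<le>m-2. a e * mpow m (Emat m) e i j) + (\<Sum>c\<in>{1..<m}. b c * munit m 0 c i j))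
      = NA m a b" for a b :: "nat \<Rightarrow> 'a"
  proof (intro ext)
    fix i j
    have 1: "(\<Sum>e\<le>m-2. a e * mpow m (Emat m) e i j)
        = (\<Sum>e\<le>m-2. if e = j - i then (if i \<le> j \<and> j < m then a e else 0) else 0)"
      by (intro sum.cong) (auto simp: mpow_E)
    have 2: "(\<Sum>c\<in>{1..<m}. b c * munit m 0 c i j)
        = (\<Sum>c\<in>{1..<m}. if c = j then (if i = 0 \<and> j < m then b c else 0) else 0)"
      by (intro sum.cong) (auto simp: munit_def)
    show "(\<Sum>e\<le>m-2. a e * mpow m (Emat m) e i j) + (\<Sum>c\<in>{1..<m}. b c * munit m 0 c i j) = NA m a b i j"
      unfolding 1 2 by (auto simp: NA_def)
  qed
  show ?thesis unfolding Nalg_def eq by auto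
qed


lemma NA_in_Nalg: "NA m a b \<in> Nalg m"
  unfolding Nalg_NA by auto

lemma evenM_in_Nalg: "m \<ge> 2 \<Longrightarrow> evenM m (P::'a::comm_ring_1 poly) \<in> Nalg m"
proof -
  assume m: "m \<ge> 2"
  have "evenM m P = NA m (coeff P) (\<lambda>j. if j \<le> m - 2 then - coeff P j else 0)"
    using m by (intro ext) (auto simp: evenM_def NA_def)
  then show ?thesis by (simp add: NA_in_Nalg)
qed

lemma oddM_in_Nalg: "oddM m Q \<in> Nalg m"
proof -
  have "oddM m Q = NA m (\<lambda>_. 0) (\<lambda>j. coeff Q (j - 1))"
    by (intro ext) (auto simp: oddM_def NA_def)
  then show ?thesis by (simp add: NA_in_Nalg)
qed

lemma topM_in_Nalg: "m \<ge> 2 \<Longrightarrow> topM m c \<in> Nalg m"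
proof -
  assume m: "m \<ge> 2"
  have "topM m c = NA m (\<lambda>_. 0) (\<lambda>j. if j = m - 1 then c else 0)"
    using m by (intro ext) (auto simp: topM_def NA_def)
  then show ?thesis by (simp add: NA_in_Nalg)
qed

lemma evenM_Neven: "m \<ge> 2 \<Longrightarrow> evenM m (P::'a::comm_ring_1 poly) \<in> Neven m"
  by (simp add: Neven_def evenM_in_Nalg) (auto simp: even_pos_def evenM_def)

lemma oddM_Nodd: "oddM m Q \<in> Nodd m"
  by (simp add: Nodd_def oddM_in_Nalg) (auto simp: even_pos_def oddM_def)

lemma coeff_monom_sum:
  "coeff (\<Sum>e\<in>A. monom (f e) (g e)) n = (\<Sum>e\<in>A. if g e = n then f e else 0)"
  by (induction A rule: infinite_finite_induct) (auto simp: coeff_monom)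

lemma Neven_evenM:
  assumes m: "m \<ge> 2" and M: "M \<in> Neven m"
  shows "\<exists>P. M = evenM m P"
proof -
  obtain a b where ab: "M = NA m a b" using M unfolding Neven_def Nalg_NA by auto
  have z: "\<And>j. 1 \<le> j \<Longrightarrow> M 0 j = 0" using M unfolding Neven_def even_pos_def by auto
  define P where "P = (\<Sum>e\<le>m-2. monom (a e) e)"
  have cP: "coeff P n = (if n \<le> m - 2 then a n else 0)" for n
    unfolding P_def coeff_monom_sum by (simp add: sum.delta')
  have "M = evenM m P"
  proof (intro ext)
    fix i j
    show "M i j = evenM m P i j"
    proof (cases "i = 0 \<and> 1 \<le> j")
      case True then show ?thesis using z by (auto simp: evenM_def)
    next
      case False
      then show ?thesis using m unfolding ab by (auto simp: NA_def evenM_def cP)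
    qed
  qed
  then show ?thesis by blast
qed

lemma Nodd_oddM:
  assumes m: "m \<ge> 2" and M: "M \<in> Nodd m"
  shows "\<exists>Q. M = oddM m Q"
proof -
  obtain a b where ab: "M = NA m a b" using M unfolding Nodd_def Nalg_NA by auto
  have z: "\<And>i j. even_pos i j \<Longrightarrow> M i j = 0" using M unfolding Nodd_def by auto
  define Q where "Q = (\<Sum>c\<in>{1..<m}. monom (M 0 c) (c - 1))"
  have cQ: "coeff Q n = (if n + 1 < m then M 0 (n + 1) else 0)" for n
  proof -
    have "coeff Q n = (\<Sum>c\<in>{1..<m}. if c = n + 1 then M 0 c else 0)"
      unfolding Q_def coeff_monom_sum by (intro sum.cong) auto
    then show ?thesis by (simp add: sum.delta)
  qed
  have "M = oddM m Q"
  proof (intro ext)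
    fix i j
    show "M i j = oddM m Q i j"
    proof (cases "i = 0 \<and> 1 \<le> j \<and> j < m")
      case True then show ?thesis by (auto simp: oddM_def cQ)
    next
      case False
      show ?thesis
      proof (cases "even_pos i j")
        case True then show ?thesis using z False by (auto simp: oddM_def)
      next
        case False2: False
        then show ?thesis using False unfolding ab by (auto simp: NA_def oddM_def even_pos_def)
      qed
    qed
  qed
  then show ?thesis by blast
qed


lemma NA_col0: "i \<noteq> 0 \<Longrightarrow> NA m a b i 0 = 0"
  by (simp add: NA_def)

lemma NA_lastrow: "m \<ge> 2 \<Longrightarrow> l \<noteq> m - Suc 0 \<Longrightarrow> NA m a b (m - Suc 0) l = 0"
  by (auto simp: NA_def)

lemma NA_mmul_top: "m \<ge> 2 \<Longrightarrow> mmul m (NA m a b) (topM m c) = mmul m (topM m c) (NA m a b)"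
proof (intro ext)
  fix i j assume m: "m \<ge> 2"
  show "mmul m (NA m a b) (topM m c) i j = mmul m (topM m c) (NA m a b) i j"
  proof (cases "i = 0 \<and> j = m - 1")
    case True
    have "mmul m (NA m a b) (topM m c) i j = NA m a b 0 0 * c"
      using True m unfolding mmul_def by (simp, subst sum_single[of 0]) (auto simp: topM_def)
    moreover have "mmul m (topM m c) (NA m a b) i j = c * NA m a b (m - 1) (m - 1)"
      using True m unfolding mmul_def by (simp, subst sum_single[of "m - 1"]) (auto simp: topM_def)
    ultimately show ?thesis using m by (simp add: NA_def mult.commute)
  next
    case False
    have "mmul m (NA m a b) (topM m c) i j = 0"
      by (rule mmul_zero_entry) (use False m in \<open>auto simp: NA_col0 topM_def\<close>)
    moreover have "mmul m (topM m c) (NA m a b) i j = 0"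
      by (rule mmul_zero_entry) (use False m in \<open>auto simp: NA_lastrow topM_def\<close>)
    ultimately show ?thesis by simp
  qed
qed

lemma topM_center: "m \<ge> 2 \<Longrightarrow> topM m c \<in> Ncenter m"
proof -
  assume m: "m \<ge> 2"
  have "mmul m (topM m c) A = mmul m A (topM m c)" if "A \<in> Nalg m" for A
  proof -
    from that obtain a b where "A = NA m a b" unfolding Nalg_NA by blast
    then show ?thesis by (simp only: NA_mmul_top[OF m])
  qed
  then show ?thesis using topM_in_Nalg[OF m] unfolding Ncenter_def by auto
qed


lemma coeff_x: "coeff [:0, 1:] n = (if n = 1 then 1 else (0::'a::comm_semiring_1))"
  by (cases n) (auto simp: coeff_pCons split: nat.split)

lemma evenM_x: "evenM m [:0, 1::'a::comm_semiring_1:] l j = (if 1 \<le> l \<and> j = l + 1 \<and> j < m then 1 else 0)"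
  unfolding evenM_def coeff_x by auto

lemma center_entries:
  fixes V :: "'a::comm_ring_1 mat"
  assumes m: "m \<ge> 3" and V: "V \<in> Ncenter m"
  shows "V 1 2 = 0" and "\<And>c. 1 \<le> c \<Longrightarrow> c \<le> m - 2 \<Longrightarrow> V 0 c = 0"
proof -
  have VA: "\<And>A. A \<in> Nalg m \<Longrightarrow> mmul m V A = mmul m A V" using V unfolding Ncenter_def by blast
  have c1: "mmul m V (oddM m (1::'a poly)) = mmul m (oddM m (1::'a poly)) V"
    by (rule VA) (rule oddM_in_Nalg)
  have c2: "mmul m V (evenM m [:0, 1:]) = mmul m (evenM m [:0, 1:]) V"
    by (rule VA) (rule evenM_in_Nalg, use m in simp)
  have "mmul m V (oddM m (1::'a poly)) 0 2 = 0"
    by (rule mmul_zero_entry) (simp add: oddM_def)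
  moreover have "mmul m (oddM m (1::'a poly)) V 0 2 = V 1 2"
  proof -
    have "mmul m (oddM m (1::'a poly)) V 0 2 = (\<Sum>l<m. oddM m (1::'a poly) 0 l * V l 2)"
      using m by (simp add: mmul_def)
    also have "\<dots> = oddM m (1::'a poly) 0 1 * V 1 2"
      using m by (intro sum_single) (auto simp: oddM_def)
    finally show ?thesis using m by (simp add: oddM_def)
  qed
  ultimately show "V 1 2 = 0" using c1 by simp
  fix c assume c: "1 \<le> c" "c \<le> m - 2"
  have "mmul m (evenM m [:0, 1:]) V 0 (c + 1) = 0"
    by (rule mmul_zero_entry) (simp add: evenM_x)
  moreover have "mmul m V (evenM m [:0, 1:]) 0 (c + 1) = V 0 c"
  proof -
    have "mmul m V (evenM m [:0, 1:]) 0 (c + 1) = (\<Sum>l<m. V 0 l * evenM m [:0, 1:] l (c + 1))"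
      using m c by (simp add: mmul_def)
    also have "\<dots> = V 0 c * evenM m [:0, 1:] c (c + 1)"
      using m c by (intro sum_single) (auto simp: evenM_x)
    finally show ?thesis using m c by (simp add: evenM_x)
  qed
  ultimately show "V 0 c = 0" using c2 by simp
qed


lemma meval_linE: "meval k \<phi> p i = linE (\<lambda>w. meval_word k \<phi> w i) p"
  by (rule ext) (simp add: meval_def linE_def)

lemma msupp_mw: "msupp k (meval_word k \<phi> w)"
  by (cases w) (simp_all add: msupp_midt msupp_mmul)

lemma mw_append: "meval_word k \<phi> (u @ v) = mmul k (meval_word k \<phi> u) (meval_word k \<phi> v)"
  by (induction u) (simp_all add: midt_left msupp_mw mmul_assoc)

lemma meval_fmul:
  assumes "p \<in> fpolys" "q \<in> fpolys"
  shows "meval k \<phi> (fmul p q) = mmul k (meval k \<phi> p) (meval k \<phi> q)"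
proof (intro ext)
  fix i j
  have "meval k \<phi> (fmul p q) i j
      = (\<Sum>u\<in>fsupp p. \<Sum>v\<in>fsupp q. p u * q v * mmul k (meval_word k \<phi> u) (meval_word k \<phi> v) i j)"
    by (simp add: meval_linE linE_fmul assms mw_append)
  also have "\<dots> = mmul k (meval k \<phi> p) (meval k \<phi> q) i j"
  proof (cases "i < k \<and> j < k")
    case True
    have "(\<Sum>u\<in>fsupp p. \<Sum>v\<in>fsupp q. p u * q v * mmul k (meval_word k \<phi> u) (meval_word k \<phi> v) i j)
        = (\<Sum>u\<in>fsupp p. \<Sum>v\<in>fsupp q. \<Sum>l<k. p u * meval_word k \<phi> u i l * (q v * meval_word k \<phi> v l j))"
      using True by (simp add: mmul_def sum_distrib_left mult_ac)
    also have "\<dots> = (\<Sum>l<k. \<Sum>u\<in>fsupp p. \<Sum>v\<in>fsupp q. p u * meval_word k \<phi> u i l * (q v * meval_word k \<phi> v l j))"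
      by (simp add: sum.swap[of _ "{..<k}"])
    also have "\<dots> = mmul k (meval k \<phi> p) (meval k \<phi> q) i j"
      using True by (simp add: mmul_def meval_def sum_product)
    finally show ?thesis .
  qed (auto simp: mmul_def)
  finally show "meval k \<phi> (fmul p q) i j = mmul k (meval k \<phi> p) (meval k \<phi> q) i j" .
qed

lemma meval_add: "p \<in> fpolys \<Longrightarrow> q \<in> fpolys \<Longrightarrow> meval k \<phi> (p + q) = meval k \<phi> p + meval k \<phi> q"
  by (intro ext) (simp add: meval_linE linE_add)

lemma meval_diff: "p \<in> fpolys \<Longrightarrow> q \<in> fpolys \<Longrightarrow> meval k \<phi> (p - q) = meval k \<phi> p - meval k \<phi> (q::'a::comm_ring_1 fpoly)"
  by (intro ext) (simp add: meval_linE linE_diff)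

lemma meval_smult: "p \<in> fpolys \<Longrightarrow> meval k \<phi> (fsmult c p) = (\<lambda>i j. c * meval k \<phi> p i j)"
  by (intro ext) (simp add: meval_linE linE_smult)

lemma meval_zero[simp]: "meval k \<phi> 0 = 0"
  by (intro ext) (simp add: meval_linE)

lemma meval_wd: "meval k \<phi> (wd w) = meval_word k \<phi> w"
  by (intro ext) (simp add: meval_linE linE_wd)

lemma meval_fone: "meval k \<phi> fone = midt k"
  using meval_wd[of k \<phi> "[]"] by (simp add: fone_eq)

lemma midt_right: "msupp m B \<Longrightarrow> mmul m B (midt m) = B"
proof (intro ext)
  fix i j assume "msupp m B"
  then show "mmul m B (midt m) i j = B i j"
    unfolding mmul_def msupp_def
    by (cases "i < m \<and> j < m") (simp_all, subst sum_single[of j], auto simp: midt_def)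
qed

lemma meval_fvar: "msupp k (\<phi> x) \<Longrightarrow> meval k \<phi> (fvar x) = \<phi> x"
  by (simp add: fvar_eq meval_wd midt_right)

lemma msupp_evenM: "m \<ge> 1 \<Longrightarrow> msupp m (evenM m P)"
  by (auto simp: msupp_def evenM_def)
lemma msupp_oddM: "msupp m (oddM m P)"
  by (auto simp: msupp_def oddM_def)

definition gradedF :: "nat \<Rightarrow> (var \<Rightarrow> 'a::comm_semiring_1 mat) \<Rightarrow> bool" where
  "gradedF m \<phi> = (\<forall>i. (\<exists>P. \<phi> (Yv i) = evenM m P) \<and> (\<exists>Q. \<phi> (Zv i) = oddM m Q))"

lemma graded_eval_F: "m \<ge> 2 \<Longrightarrow> graded_eval m \<phi> \<Longrightarrow> gradedF m \<phi>"
  unfolding graded_eval_def gradedF_def using Neven_evenM Nodd_oddM by blast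

definition nodd :: "var list \<Rightarrow> nat" where
  "nodd w = length (filter is_odd_var w)"

lemma nodd_simps[simp]: "nodd [] = 0" "nodd (Yv i # w) = nodd w" "nodd (Zv i # w) = Suc (nodd w)"
  by (simp_all add: nodd_def is_odd_var_def)

lemma mw_parity:
  assumes m: "m \<ge> 1" and F: "gradedF m \<phi>"
  shows "(nodd w = 0 \<longrightarrow> (\<exists>P. meval_word m \<phi> w = evenM m P))
       \<and> (nodd w = 1 \<longrightarrow> (\<exists>Q. meval_word m \<phi> w = oddM m Q))
       \<and> (nodd w \<ge> 2 \<longrightarrow> meval_word m \<phi> w = 0)"
proof (induction w)
  case Nil
  then show ?case using m by (auto simp: midt_evenM)
next
  case (Cons x w)
  show ?case
  proof (cases x)
    case (Yv i)
    obtain P where P: "\<phi> x = evenM m P" using F Yv unfolding gradedF_def by auto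
    have mw: "meval_word m \<phi> (x # w) = mmul m (evenM m P) (meval_word m \<phi> w)" by (simp add: P)
    have n: "nodd (x # w) = nodd w" using Yv by simp
    show ?thesis
    proof (cases "nodd w = 0")
      case True
      then obtain P' where "meval_word m \<phi> w = evenM m P'" using Cons.IH by auto
      then show ?thesis using True n m mw by (auto simp: mmul_even_even)
    next
      case False
      show ?thesis
      proof (cases "nodd w = 1")
        case True
        then obtain Q' where "meval_word m \<phi> w = oddM m Q'" using Cons.IH by auto
        then show ?thesis using True n m mw by (auto simp: mmul_even_odd)
      next
        case False2: False
        then have "meval_word m \<phi> w = 0" using Cons.IH False by (auto simp: zero_fun_def)
        then have "meval_word m \<phi> (x # w) = 0" using mw by simp
        then show ?thesis using False False2 n by simp
      qed
    qed
  next
    case (Zv i)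
    obtain Q where Q: "\<phi> x = oddM m Q" using F Zv unfolding gradedF_def by auto
    have mw: "meval_word m \<phi> (x # w) = mmul m (oddM m Q) (meval_word m \<phi> w)" by (simp add: Q)
    have n: "nodd (x # w) = Suc (nodd w)" using Zv by simp
    show ?thesis
    proof (cases "nodd w = 0")
      case True
      then obtain P' where "meval_word m \<phi> w = evenM m P'" using Cons.IH by auto
      then show ?thesis using True n m mw by (auto simp: mmul_odd_even)
    next
      case False
      show ?thesis
      proof (cases "nodd w = 1")
        case True
        then obtain Q' where "meval_word m \<phi> w = oddM m Q'" using Cons.IH by auto
        then have "meval_word m \<phi> (x # w) = 0" using mw by (simp add: mmul_odd_odd)
        then show ?thesis using True n by simp
      next
        case False2: False
        then have "meval_word m \<phi> w = 0" using Cons.IH False by (auto simp: zero_fun_def)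
        then have "meval_word m \<phi> (x # w) = 0" using mw by simp
        then show ?thesis using False False2 n by simp
      qed
    qed
  qed
qed

lemma word_odd_nodd: "word_odd w = odd (nodd w)"
  by (simp add: word_odd_def nodd_def)

lemma mw_even:
  assumes "m \<ge> 1" "gradedF m \<phi>" "\<not> word_odd w"
  shows "\<exists>P. meval_word m \<phi> w = evenM m P"
proof (cases "nodd w = 0")
  case False
  then have "nodd w \<ge> 2" using assms(3) by (auto simp: word_odd_nodd elim: oddE)
  then show ?thesis using mw_parity[OF assms(1,2), of w] by (metis evenM_0)
qed (use mw_parity[OF assms(1,2), of w] in auto)

lemma mw_odd:
  assumes "m \<ge> 1" "gradedF m \<phi>" "word_odd w"
  shows "\<exists>Q. meval_word m \<phi> w = oddM m Q"
proof (cases "nodd w = 1")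
  case False
  then have "nodd w \<ge> 2" using assms(3) by (cases "nodd w") (auto simp: word_odd_nodd)
  then show ?thesis using mw_parity[OF assms(1,2), of w] by (metis oddM_0)
qed (use mw_parity[OF assms(1,2), of w] in auto)

lemma mw_gen:
  assumes "m \<ge> 1" "gradedF m \<phi>"
  shows "\<exists>P Q. meval_word m \<phi> w = evenM m P + oddM m Q"
proof (cases "word_odd w")
  case True
  then obtain Q where "meval_word m \<phi> w = oddM m Q" using mw_odd[OF assms] by blast
  then have "meval_word m \<phi> w = evenM m 0 + oddM m Q" by simp
  then show ?thesis by blast
next
  case False
  then obtain P where "meval_word m \<phi> w = evenM m P" using mw_even[OF assms] by blast
  then have "meval_word m \<phi> w = evenM m P + oddM m 0" by simp
  then show ?thesis by blast
qed

lemma meval_sum_words: "meval k \<phi> p = (\<Sum>w\<in>fsupp p. (\<lambda>i j. p w * meval_word k \<phi> w i j))"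
  by (intro ext) (simp add: meval_def sum_fun_apply)

lemma evenM_smult: "(\<lambda>i j. c * evenM m P i j) = evenM m (smult c P)"
  by (intro ext) (simp add: evenM_def)
lemma oddM_smult: "(\<lambda>i j. c * oddM m P i j) = oddM m (smult c P)"
  by (intro ext) (simp add: oddM_def)

lemma evenM_sum: "(\<Sum>w\<in>A. evenM m (f w)) = evenM m (\<Sum>w\<in>A. f w)"
  by (induction A rule: infinite_finite_induct) (simp_all add: evenM_add)
lemma oddM_sum: "(\<Sum>w\<in>A. oddM m (f w)) = oddM m (\<Sum>w\<in>A. f w)"
  by (induction A rule: infinite_finite_induct) (simp_all add: oddM_add)

lemma meval_even:
  assumes "m \<ge> 1" "gradedF m \<phi>" "even_fpoly p"
  shows "\<exists>P. meval m \<phi> p = evenM m P"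
proof -
  have "\<forall>w\<in>fsupp p. \<exists>P. meval_word m \<phi> w = evenM m P"
    using assms mw_even unfolding even_fpoly_def fsupp_def by blast
  then obtain Pf where Pf: "\<And>w. w \<in> fsupp p \<Longrightarrow> meval_word m \<phi> w = evenM m (Pf w)" by metis
  have "meval m \<phi> p = (\<Sum>w\<in>fsupp p. evenM m (smult (p w) (Pf w)))"
    unfolding meval_sum_words by (intro sum.cong) (simp_all add: Pf evenM_smult)
  then have "meval m \<phi> p = evenM m (\<Sum>w\<in>fsupp p. smult (p w) (Pf w))" by (simp add: evenM_sum)
  then show ?thesis by blast
qed

lemma meval_odd:
  assumes "m \<ge> 1" "gradedF m \<phi>" "odd_fpoly p"
  shows "\<exists>Q. meval m \<phi> p = oddM m Q"
proof -
  have "\<forall>w\<in>fsupp p. \<exists>Q. meval_word m \<phi> w = oddM m Q"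
    using assms mw_odd unfolding odd_fpoly_def fsupp_def by blast
  then obtain Qf where Qf: "\<And>w. w \<in> fsupp p \<Longrightarrow> meval_word m \<phi> w = oddM m (Qf w)" by metis
  have "meval m \<phi> p = (\<Sum>w\<in>fsupp p. oddM m (smult (p w) (Qf w)))"
    unfolding meval_sum_words by (intro sum.cong) (simp_all add: Qf oddM_smult)
  then have "meval m \<phi> p = oddM m (\<Sum>w\<in>fsupp p. smult (p w) (Qf w))" by (simp add: oddM_sum)
  then show ?thesis by blast
qed

lemma meval_gen:
  assumes "m \<ge> 1" "gradedF m \<phi>"
  shows "\<exists>P Q. meval m \<phi> p = evenM m P + oddM m Q"
proof -
  have "\<forall>w\<in>fsupp p. \<exists>PQ. meval_word m \<phi> w = evenM m (fst PQ) + oddM m (snd PQ)"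
    using mw_gen[OF assms] by auto
  then obtain f where f: "\<And>w. w \<in> fsupp p \<Longrightarrow> meval_word m \<phi> w = evenM m (fst (f w)) + oddM m (snd (f w))"
    by metis
  have "meval m \<phi> p = (\<Sum>w\<in>fsupp p. evenM m (smult (p w) (fst (f w))) + oddM m (smult (p w) (snd (f w))))"
    unfolding meval_sum_words
    by (intro sum.cong) (simp_all add: f distrib_left evenM_smult[symmetric] oddM_smult[symmetric] plus_fun_def)
  then have "meval m \<phi> p = evenM m (\<Sum>w\<in>fsupp p. smult (p w) (fst (f w))) + oddM m (\<Sum>w\<in>fsupp p. smult (p w) (snd (f w)))"
    by (simp add: evenM_sum oddM_sum sum.distrib)
  then show ?thesis by blast
qed

lemma meval_subst_word:
  assumes "\<And>x. \<sigma> x \<in> fpolys"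
  shows "meval k \<phi> (subst_word \<sigma> u) = meval_word k (\<lambda>x. meval k \<phi> (\<sigma> x)) u"
  by (induction u) (simp_all add: meval_fone meval_fmul assms fpolys_subst_word)

lemma meval_fsubst:
  assumes "\<And>x. \<sigma> x \<in> fpolys" "p \<in> fpolys"
  shows "meval k \<phi> (fsubst \<sigma> p) = meval k (\<lambda>x. meval k \<phi> (\<sigma> x)) p"
proof (intro ext)
  fix i j
  have "meval k \<phi> (fsubst \<sigma> p) i j = (\<Sum>u\<in>fsupp p. p u * meval k \<phi> (subst_word \<sigma> u) i j)"
    unfolding fsubst_repr meval_linE
    by (simp add: linE_sum fin_fsupp assms fpolys_smult fpolys_subst_word linE_smult)
  also have "\<dots> = (\<Sum>u\<in>fsupp p. p u * meval_word k (\<lambda>x. meval k \<phi> (\<sigma> x)) u i j)"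
    by (simp add: meval_subst_word assms)
  also have "\<dots> = meval k (\<lambda>x. meval k \<phi> (\<sigma> x)) p i j"
    by (simp only: meval_def)
  finally show "meval k \<phi> (fsubst \<sigma> p) i j = meval k (\<lambda>x. meval k \<phi> (\<sigma> x)) p i j" .
qed

definition Jset :: "nat \<Rightarrow> 'a::comm_ring_1 mat set \<Rightarrow> 'a fpoly set" where
  "Jset m I = {p \<in> fpolys. \<forall>\<phi>. graded_eval m \<phi> \<longrightarrow> meval m \<phi> p \<in> I}"

lemma graded_subst_eval:
  fixes \<phi> :: "var \<Rightarrow> 'a::comm_ring_1 mat"
  assumes m: "m \<ge> 2" and \<sigma>: "graded_subst \<sigma>" and \<phi>: "graded_eval m \<phi>"
  shows "graded_eval m (\<lambda>x. meval m \<phi> (\<sigma> x))"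
proof -
  have F: "gradedF m \<phi>" using graded_eval_F m \<phi> by blast
  have m1: "m \<ge> 1" using m by simp
  show ?thesis unfolding graded_eval_def
  proof
    fix i
    have "even_fpoly (\<sigma> (Yv i))" using \<sigma> by (auto simp: graded_subst_def is_odd_var_def)
    then obtain P where "meval m \<phi> (\<sigma> (Yv i)) = evenM m P" using meval_even[OF m1 F] by blast
    moreover have "odd_fpoly (\<sigma> (Zv i))" using \<sigma> by (auto simp: graded_subst_def is_odd_var_def)
    then obtain Q where "meval m \<phi> (\<sigma> (Zv i)) = oddM m Q" using meval_odd[OF m1 F] by blast
    ultimately show "meval m \<phi> (\<sigma> (Yv i)) \<in> Neven m \<and> meval m \<phi> (\<sigma> (Zv i)) \<in> Nodd m"
      using evenM_Neven[OF m, of P] oddM_Nodd[of m Q] by simp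
  qed
qed

lemma Jset_T2:
  fixes I :: "'a::comm_ring_1 mat set"
  assumes m: "m \<ge> 2"
    and I0: "0 \<in> I"
    and Iadd: "\<And>A B. A \<in> I \<Longrightarrow> B \<in> I \<Longrightarrow> A + B \<in> I"
    and Ism: "\<And>A c. A \<in> I \<Longrightarrow> (\<lambda>i j. c * A i j) \<in> I"
    and Il: "\<And>A P Q. A \<in> I \<Longrightarrow> mmul m (evenM m P + oddM m Q) A \<in> I"
    and Ir: "\<And>A P Q. A \<in> I \<Longrightarrow> mmul m A (evenM m P + oddM m Q) \<in> I"
  shows "T2_closed (Jset m I)"
  unfolding T2_closed_def
proof (intro conjI ballI allI impI)
  show "Jset m I \<subseteq> fpolys" by (auto simp: Jset_def)
  show "fzero \<in> Jset m I" by (simp add: Jset_def fzero_eq I0)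
next
  fix p q assume p: "p \<in> Jset m I" and q: "q \<in> Jset m I"
  then show "fadd p q \<in> Jset m I"
    by (auto simp: Jset_def fadd_eq meval_add Iadd)
next
  fix c p assume p: "p \<in> Jset m I"
  then show "fsmult c p \<in> Jset m I"
    by (auto simp: Jset_def meval_smult Ism)
next
  fix p and q :: "'a fpoly" assume p: "p \<in> Jset m I" and q: "q \<in> fpolys"
  have m1: "m \<ge> 1" using m by simp
  show "fmul q p \<in> Jset m I" unfolding Jset_def
  proof (intro CollectI conjI allI impI)
    show "fmul q p \<in> fpolys" using p q by (auto simp: Jset_def)
    fix \<phi> :: "var \<Rightarrow> 'a mat" assume \<phi>: "graded_eval m \<phi>"
    obtain P Q where "meval m \<phi> q = evenM m P + oddM m Q"
      using meval_gen[OF m1 graded_eval_F[OF m \<phi>]] by blast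
    then show "meval m \<phi> (fmul q p) \<in> I" using p q \<phi>
      by (auto simp: Jset_def meval_fmul Il)
  qed
  show "fmul p q \<in> Jset m I" unfolding Jset_def
  proof (intro CollectI conjI allI impI)
    show "fmul p q \<in> fpolys" using p q by (auto simp: Jset_def)
    fix \<phi> :: "var \<Rightarrow> 'a mat" assume \<phi>: "graded_eval m \<phi>"
    obtain P Q where "meval m \<phi> q = evenM m P + oddM m Q"
      using meval_gen[OF m1 graded_eval_F[OF m \<phi>]] by blast
    then show "meval m \<phi> (fmul p q) \<in> I" using p q \<phi>
      by (auto simp: Jset_def meval_fmul Ir)
  qed
next
  fix \<sigma> :: "var \<Rightarrow> 'a fpoly" and p
  assume \<sigma>: "graded_subst \<sigma>" and p: "p \<in> Jset m I"
  have sf: "\<And>x. \<sigma> x \<in> fpolys" using \<sigma> by (simp add: graded_subst_def)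
  show "fsubst \<sigma> p \<in> Jset m I" unfolding Jset_def
  proof (intro CollectI conjI allI impI)
    show "fsubst \<sigma> p \<in> fpolys" using sf by (rule fpolys_fsubst)
    fix \<phi> :: "var \<Rightarrow> 'a mat" assume \<phi>: "graded_eval m \<phi>"
    have "graded_eval m (\<lambda>x. meval m \<phi> (\<sigma> x))" by (rule graded_subst_eval[OF m \<sigma> \<phi>])
    then show "meval m \<phi> (fsubst \<sigma> p) \<in> I" using p sf
      by (auto simp: Jset_def meval_fsubst)
  qed
qed


lemma T2_ideal_least: "S \<subseteq> I \<Longrightarrow> T2_closed I \<Longrightarrow> T2_ideal S \<subseteq> I"
  unfolding T2_ideal_def by blast

lemma meval_fcomm:
  "p \<in> fpolys \<Longrightarrow> q \<in> fpolys \<Longrightarrow>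
   meval k \<phi> (fcomm p q) = mmul k (meval k \<phi> p) (meval k \<phi> q) - mmul k (meval k \<phi> q) (meval k \<phi> (p::'a::comm_ring_1 fpoly))"
  by (simp add: fcomm_def fsub_eq meval_diff meval_fmul fpolys_fmul)

lemma oddM_diff: "oddM m A - oddM m B = oddM m (A - B)"
  by (intro ext) (simp add: oddM_def)
lemma evenM_diff: "evenM m A - evenM m B = evenM m (A - B)"
  by (intro ext) (simp add: evenM_def)

lemma gradedF_Y: "gradedF m \<phi> \<Longrightarrow> \<exists>P. \<phi> (Yv i) = evenM m P"
  by (simp add: gradedF_def)
lemma gradedF_Z: "gradedF m \<phi> \<Longrightarrow> \<exists>Q. \<phi> (Zv i) = oddM m Q"
  by (simp add: gradedF_def)

lemma gradedF_msupp: "m \<ge> 1 \<Longrightarrow> gradedF m \<phi> \<Longrightarrow> msupp m (\<phi> x)"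
proof (cases x)
  case (Yv i)
  assume "m \<ge> 1" "gradedF m \<phi>"
  then obtain P where "\<phi> (Yv i) = evenM m P" using gradedF_Y by blast
  then show ?thesis using Yv \<open>m \<ge> 1\<close> by (simp add: msupp_evenM)
next
  case (Zv i)
  assume "m \<ge> 1" "gradedF m \<phi>"
  then obtain Q where "\<phi> (Zv i) = oddM m Q" using gradedF_Z by blast
  then show ?thesis using Zv by (simp add: msupp_oddM)
qed

lemma poly_minus_const: "\<exists>S. P - [:coeff P 0:] = monom 1 1 * (S::'a::comm_ring_1 poly)"
proof -
  obtain a q where "P = pCons a q" by (rule pCons_cases)
  then have "P - [:coeff P 0:] = monom 1 1 * q" by (simp add: monom_Suc)
  then show ?thesis by blast
qed

lemma comm_chain:
  fixes \<phi> :: "var \<Rightarrow> 'a::comm_ring_1 mat"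
  assumes m: "m \<ge> 1" and F: "gradedF m \<phi>"
  shows "p \<in> fpolys \<Longrightarrow> meval m \<phi> p = oddM m (monom 1 l * R) \<Longrightarrow>
    \<exists>R'. meval m \<phi> (fcomm_list p (map (\<lambda>i. fvar (Yv i)) ys)) = oddM m (monom 1 (l + length ys) * R')"
proof (induction ys arbitrary: p l R)
  case Nil
  then show ?case by (auto simp: fcomm_list_def)
next
  case (Cons y ys)
  obtain P where P: "\<phi> (Yv y) = evenM m P" using gradedF_Y[OF F] by blast
  obtain S where S: "P - [:coeff P 0:] = monom 1 1 * S" using poly_minus_const by blast
  have ev: "meval m \<phi> (fvar (Yv y)) = evenM m P"
    using meval_fvar[OF gradedF_msupp[OF m F]] P by simp
  have "meval m \<phi> (fcomm p (fvar (Yv y)))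
      = oddM m (monom 1 l * R * P) - oddM m (smult (coeff P 0) (monom 1 l * R))"
    using Cons.prems m by (simp add: meval_fcomm ev mmul_odd_even mmul_even_odd)
  also have "\<dots> = oddM m (monom 1 l * R * (P - [:coeff P 0:]))"
    by (simp add: oddM_diff algebra_simps)
  also have "\<dots> = oddM m (monom 1 (Suc l) * (R * S))"
    by (simp add: S mult_monom algebra_simps)
  finally have "meval m \<phi> (fcomm p (fvar (Yv y))) = oddM m (monom 1 (Suc l) * (R * S))" .
  then obtain R' where "meval m \<phi> (fcomm_list (fcomm p (fvar (Yv y))) (map (\<lambda>i. fvar (Yv i)) ys))
      = oddM m (monom 1 (Suc l + length ys) * R')"
    using Cons.IH[of "fcomm p (fvar (Yv y))" "Suc l" "R * S"] Cons.prems by auto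
  then show ?case by (auto simp: fcomm_list_def)
qed

lemma zero_mat: "(\<lambda>i j. 0) = (0::'a::zero mat)"
  by (simp add: zero_fun_def)

lemma IdN_Jset: "IdN m = Jset m {0}"
  unfolding IdN_def Jset_def zero_mat by simp

lemma IdN_T2:
  assumes "m \<ge> 2" shows "T2_closed (IdN m :: 'a::comm_ring_1 fpoly set)"
  unfolding IdN_Jset by (rule Jset_T2[OF assms]) (simp_all add: zero_mat)

lemma topM_add: "topM m a + topM m b = topM m (a + b)"
  by (intro ext) (simp add: topM_def)

lemma Jtop_T2:
  assumes m: "m \<ge> 2" shows "T2_closed (Jset m (range (topM m)) :: 'a::comm_ring_1 fpoly set)"
proof (rule Jset_T2[OF m])
  show "0 \<in> range (topM m)" by (rule range_eqI[of _ _ 0]) (simp add: topM_def zero_fun_def)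
next
  fix A B :: "'a mat" assume "A \<in> range (topM m)" "B \<in> range (topM m)"
  then show "A + B \<in> range (topM m)" by (auto simp: topM_add)
next
  fix A :: "'a mat" and c assume "A \<in> range (topM m)"
  then obtain a where "A = topM m a" by auto
  then have "(\<lambda>i j. c * A i j) = topM m (c * a)" by (intro ext) (simp add: topM_def)
  then show "(\<lambda>i j. c * A i j) \<in> range (topM m)" by simp
next
  fix A :: "'a mat" and P Q assume "A \<in> range (topM m)"
  then obtain a where a: "A = topM m a" by auto
  show "mmul m (evenM m P + oddM m Q) A \<in> range (topM m)"
    using m by (simp add: a mmul_add_left mmul_even_top mmul_odd_top)
  show "mmul m A (evenM m P + oddM m Q) \<in> range (topM m)"
    using m by (simp add: a mmul_add_right mmul_top_even mmul_top_odd)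
qed

lemma oddM_monom_zero: "d + 1 = m \<Longrightarrow> oddM m (monom 1 d * R) = 0"
  by (intro ext) (auto simp: oddM_def coeff_monom_mult)

lemma oddM_monom_top: "d + 2 = m \<Longrightarrow> oddM m (monom 1 d * R) = topM m (coeff R 0)"
  by (intro ext) (auto simp: oddM_def topM_def coeff_monom_mult)

definition Sgen :: "nat \<Rightarrow> 'a::comm_ring_1 fpoly set" where
  "Sgen k = {fcomm (fvar (Yv 1)) (fvar (Yv 2)),
                    fcomm_list (fvar (Zv 0)) (map (\<lambda>i. fvar (Yv i)) [1..<k - 1]),
                    fmul (fvar (Zv 1)) (fvar (Zv 2))}"

lemma Sgen_fpolys: "Sgen k \<subseteq> fpolys"
  by (auto simp: Sgen_def intro!: fpolys_fcomm_list fpolys_fcomm fpolys_fmul)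

lemma gen_evals:
  fixes \<phi> :: "var \<Rightarrow> 'a::comm_ring_1 mat"
  assumes m: "m \<ge> 2" and \<phi>: "graded_eval m \<phi>"
  shows "meval m \<phi> (fcomm (fvar (Yv 1)) (fvar (Yv 2))) = 0"
    and "meval m \<phi> (fmul (fvar (Zv 1)) (fvar (Zv 2))) = 0"
    and "\<exists>R. meval m \<phi> (fcomm_list (fvar (Zv 0)) (map (\<lambda>i. fvar (Yv i)) [1..<k - 1]))
           = oddM m (monom 1 (k - 2) * R)"
proof -
  have m1: "m \<ge> 1" using m by simp
  have F: "gradedF m \<phi>" using graded_eval_F[OF m \<phi>] .
  have fv: "\<And>x. meval m \<phi> (fvar x) = \<phi> x" using meval_fvar[OF gradedF_msupp[OF m1 F]] .
  obtain P1 where P1: "\<phi> (Yv 1) = evenM m P1" using gradedF_Y[OF F] by blast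
  obtain P2 where P2: "\<phi> (Yv 2) = evenM m P2" using gradedF_Y[OF F] by blast
  show "meval m \<phi> (fcomm (fvar (Yv 1)) (fvar (Yv 2))) = 0"
    using m1 by (simp only: meval_fcomm fpolys_fvar fv P1 P2) (simp add: mmul_even_even mult.commute)
  obtain Q1 where Q1: "\<phi> (Zv 1) = oddM m Q1" using gradedF_Z[OF F] by blast
  obtain Q2 where Q2: "\<phi> (Zv 2) = oddM m Q2" using gradedF_Z[OF F] by blast
  show "meval m \<phi> (fmul (fvar (Zv 1)) (fvar (Zv 2))) = 0"
    by (simp only: meval_fmul fpolys_fvar fv Q1 Q2 mmul_odd_odd)
  obtain Q0 where Q0: "\<phi> (Zv 0) = oddM m Q0" using gradedF_Z[OF F] by blast
  have "meval m \<phi> (fvar (Zv 0)) = oddM m (monom 1 0 * Q0)" by (simp add: fv Q0)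
  from comm_chain[OF m1 F _ this, of "[1..<k - 1]"]
  show "\<exists>R. meval m \<phi> (fcomm_list (fvar (Zv 0)) (map (\<lambda>i. fvar (Yv i)) [1..<k - 1]))
           = oddM m (monom 1 (k - 2) * R)" by (simp add: numeral_2_eq_2)
qed

lemma T_sub_IdN:
  assumes k: "k \<ge> 3"
  shows "T2_ideal (Sgen k) \<subseteq> (IdN (k - 1) :: 'a::comm_ring_1 fpoly set)"
proof (rule T2_ideal_least)
  show "T2_closed (IdN (k - 1) :: 'a fpoly set)" using k by (intro IdN_T2) simp
  show "Sgen k \<subseteq> (IdN (k - 1) :: 'a fpoly set)"
  proof
    fix p :: "'a fpoly" assume p: "p \<in> Sgen k"
    have "meval (k - 1) \<phi> p = 0" if \<phi>: "graded_eval (k - 1) \<phi>" for \<phi> :: "var \<Rightarrow> 'a mat"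
    proof -
      have m: "k - 1 \<ge> 2" using k by simp
      obtain R where R: "meval (k - 1) \<phi> (fcomm_list (fvar (Zv 0)) (map (\<lambda>i. fvar (Yv i)) [1..<k - 1]))
           = oddM (k - 1) (monom 1 (k - 2) * R)" using gen_evals(3)[OF m \<phi>] by blast
      have "oddM (k - 1) (monom 1 (k - 2) * R) = 0" using k by (intro oddM_monom_zero) simp
      then show ?thesis using p gen_evals(1,2)[OF m \<phi>] R by (auto simp: Sgen_def)
    qed
    then show "p \<in> IdN (k - 1)" using p Sgen_fpolys by (auto simp: IdN_Jset Jset_def)
  qed
qed

lemma T_sub_Jtop:
  assumes k: "k \<ge> 3"
  shows "T2_ideal (Sgen k) \<subseteq> (Jset k (range (topM k)) :: 'a::comm_ring_1 fpoly set)"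
proof (rule T2_ideal_least)
  show "T2_closed (Jset k (range (topM k)) :: 'a fpoly set)" using k by (intro Jtop_T2) simp
  show "Sgen k \<subseteq> (Jset k (range (topM k)) :: 'a fpoly set)"
  proof
    fix p :: "'a fpoly" assume p: "p \<in> Sgen k"
    have "meval k \<phi> p \<in> range (topM k)" if \<phi>: "graded_eval k \<phi>" for \<phi> :: "var \<Rightarrow> 'a mat"
    proof -
      have m: "k \<ge> 2" using k by simp
      obtain R where R: "meval k \<phi> (fcomm_list (fvar (Zv 0)) (map (\<lambda>i. fvar (Yv i)) [1..<k - 1]))
           = oddM k (monom 1 (k - 2) * R)" using gen_evals(3)[OF m \<phi>] by blast
      have "oddM k (monom 1 (k - 2) * R) = topM k (coeff R 0)" using k by (intro oddM_monom_top) simp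
      moreover have "(0::'a mat) = topM k 0" by (intro ext) (simp add: topM_def)
      ultimately show ?thesis using p gen_evals(1,2)[OF m \<phi>] R by (auto simp: Sgen_def)
    qed
    then show "p \<in> Jset k (range (topM k))" using p Sgen_fpolys by (auto simp: Jset_def)
  qed
qed

lemma zero_graded: "m \<ge> 2 \<Longrightarrow> graded_eval m (\<lambda>x. 0 :: 'a::comm_ring_1 mat)"
  using evenM_Neven[of m 0] oddM_Nodd[of m 0] by (simp add: graded_eval_def)

lemma meval_zero_eval: "p \<in> fpolys \<Longrightarrow> meval m (\<lambda>x. 0) p = (\<lambda>i j. p [] * midt m i j)"
proof (intro ext)
  fix i j assume "p \<in> fpolys"
  have "meval m (\<lambda>x. 0) p i j = (\<Sum>w\<in>fsupp p. if w = [] then p w * midt m i j else 0)"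
    unfolding meval_def by (intro sum.cong) (auto simp: neq_Nil_conv)
  also have "\<dots> = p [] * midt m i j"
    using \<open>p \<in> fpolys\<close> by (cases "p [] = 0") (auto simp: fsupp_def fpolys_def)
  finally show "meval m (\<lambda>x. 0) p i j = p [] * midt m i j" .
qed

lemma Jtop_sub_CN:
  assumes m: "m \<ge> 2"
  shows "Jset m (range (topM m)) \<subseteq> (CN m :: 'a::comm_ring_1 fpoly set)"
proof
  fix p :: "'a fpoly" assume p: "p \<in> Jset m (range (topM m))"
  then obtain c where c: "meval m (\<lambda>x. 0) p = topM m c"
    using zero_graded[OF m] unfolding Jset_def by blast
  have pf: "p \<in> fpolys" using p by (simp add: Jset_def)
  have "meval m (\<lambda>x. 0) p 0 0 = p []" using m pf by (simp add: meval_zero_eval midt_def)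
  moreover have "topM m c 0 0 = 0" using m by (simp add: topM_def)
  ultimately have "p [] = 0" using c by simp
  moreover have "meval m \<phi> p \<in> Ncenter m" if ph: "graded_eval m \<phi>" for \<phi>
  proof -
    obtain c' where "meval m \<phi> p = topM m c'" using p ph unfolding Jset_def by blast
    then show ?thesis using topM_center[OF m] by simp
  qed
  ultimately show "p \<in> CN m" using p by (auto simp: CN_def Jset_def)
qed


definition TT :: "nat \<Rightarrow> 'a::comm_ring_1 fpoly set" where
  "TT k = T2_ideal (Sgen k)"

lemma TT_gen: "Sgen k \<subseteq> TT k"
  by (auto simp: TT_def T2_ideal_def)

lemma TT_add: "p \<in> TT k \<Longrightarrow> q \<in> TT k \<Longrightarrow> p + q \<in> TT k"
  by (auto simp: TT_def T2_ideal_def T2_closed_def fadd_eq)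

lemma TT_smult: "p \<in> TT k \<Longrightarrow> fsmult c p \<in> TT k"
  by (auto simp: TT_def T2_ideal_def T2_closed_def)

lemma TT_zero: "0 \<in> TT k"
  by (auto simp: TT_def T2_ideal_def T2_closed_def fzero_eq)

lemma TT_mul_left: "p \<in> TT k \<Longrightarrow> q \<in> fpolys \<Longrightarrow> fmul q p \<in> TT k"
  by (auto simp: TT_def T2_ideal_def T2_closed_def)

lemma TT_mul_right: "p \<in> TT k \<Longrightarrow> q \<in> fpolys \<Longrightarrow> fmul p q \<in> TT k"
  by (auto simp: TT_def T2_ideal_def T2_closed_def)

lemma TT_subst: "graded_subst \<sigma> \<Longrightarrow> p \<in> TT k \<Longrightarrow> fsubst \<sigma> p \<in> TT k"
  by (auto simp: TT_def T2_ideal_def T2_closed_def)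

lemma TT_fpolys: "TT k \<subseteq> fpolys"
proof -
  have "T2_closed (fpolys :: 'a fpoly set)"
    unfolding T2_closed_def
    by (auto simp: fzero_eq fadd_eq graded_subst_def intro!: fpolys_fsubst)
  then show ?thesis using Sgen_fpolys unfolding TT_def T2_ideal_def by blast
qed

lemma TT_neg: "p \<in> TT k \<Longrightarrow> - p \<in> TT k"
proof -
  assume "p \<in> TT k"
  then have "fsmult (-1) p \<in> TT k" by (rule TT_smult)
  moreover have "fsmult (-1) p = - p" by (rule ext) (simp add: fsmult_def)
  ultimately show ?thesis by simp
qed

lemma TT_diff: "p \<in> TT k \<Longrightarrow> q \<in> TT k \<Longrightarrow> p - q \<in> TT k"
  using TT_add[of p k "- q"] TT_neg[of q k] by simp

lemma TT_sum_list: "(\<And>x. x \<in> set xs \<Longrightarrow> f x \<in> TT k) \<Longrightarrow> sum_list (map f xs) \<in> TT k"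
  by (induction xs) (auto intro: TT_add TT_zero)

lemma TT_sum: "(\<And>x. x \<in> A \<Longrightarrow> f x \<in> TT k) \<Longrightarrow> sum f A \<in> TT k"
  by (induction A rule: infinite_finite_induct) (auto intro: TT_add TT_zero)

lemma TT_fcomm: "p \<in> TT k \<Longrightarrow> q \<in> fpolys \<Longrightarrow> fcomm p q \<in> TT k"
  by (simp add: fcomm_def fsub_eq TT_diff TT_mul_left TT_mul_right)

lemma TT_fcomm_list: "p \<in> TT k \<Longrightarrow> set qs \<subseteq> fpolys \<Longrightarrow> fcomm_list p qs \<in> TT k"
  unfolding fcomm_list_def by (induction qs arbitrary: p) (auto intro: TT_fcomm)

lemma fcomm_list_diff:
  "p \<in> fpolys \<Longrightarrow> q \<in> fpolys \<Longrightarrow> set qs \<subseteq> fpolys \<Longrightarrow>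
   fcomm_list p qs - fcomm_list q qs = fcomm_list (p - q) (qs :: 'a::comm_ring_1 fpoly list)"
  unfolding fcomm_list_def
proof (induction qs arbitrary: p q)
  case (Cons r qs)
  have "foldl fcomm (fcomm p r) qs - foldl fcomm (fcomm q r) qs = foldl fcomm (fcomm p r - fcomm q r) qs"
    using Cons by (intro Cons.IH) auto
  moreover have "fcomm p r - fcomm q r = fcomm (p - q) r"
    by (simp add: fcomm_def fsub_eq fmul_diff_left fmul_diff_right)
  ultimately show ?case by (simp only: foldl_Cons)
qed simp

lemma jacobi_swap:
  "fcomm (fcomm X a) b - fcomm (fcomm X b) a = fmul X (fcomm a b) - fmul (fcomm a b) (X::'a::comm_ring_1 fpoly)"
  by (simp add: fcomm_def fsub_eq fmul_diff_left fmul_diff_right fmul_assoc algebra_simps)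

lemma fmul_comm_split: "fmul X Y = fcomm X Y + fmul Y (X::'a::comm_ring_1 fpoly)"
  by (simp add: fcomm_def fsub_eq)

definition fY :: "nat \<Rightarrow> 'a::comm_ring_1 fpoly" where "fY i = fvar (Yv i)"
definition Ym :: "nat list \<Rightarrow> 'a::comm_ring_1 fpoly" where "Ym l = wd (map Yv l)"
definition Cz :: "nat \<Rightarrow> nat list \<Rightarrow> 'a::comm_ring_1 fpoly" where
  "Cz j l = fcomm_list (fvar (Zv j)) (map fY l)"

lemma fpolys_fY[simp]: "fY i \<in> fpolys" by (simp add: fY_def)
lemma fpolys_Ym[simp]: "Ym l \<in> fpolys" by (simp add: Ym_def)
lemma set_map_fY: "set (map fY l) \<subseteq> fpolys" by auto
lemma fpolys_Cz[simp]: "Cz j l \<in> fpolys" unfolding Cz_def by (intro fpolys_fcomm_list) auto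

lemma Ym_Nil: "Ym [] = fone" by (simp add: Ym_def wd_Nil)
lemma Ym_Cons: "Ym (i # l) = fmul (fY i) (Ym l)" by (simp add: Ym_def wd_Cons fY_def)
lemma Ym_append: "Ym (u @ v) = fmul (Ym u) (Ym v)" by (simp add: Ym_def wd_append)

lemma wd_single: "wd [x] = (fvar x :: 'a::comm_semiring_1 fpoly)"
  by (simp add: wd_Cons wd_Nil)

lemma even_fvar: "\<not> is_odd_var x \<Longrightarrow> even_fpoly (fvar x)"
  by (auto simp: even_fpoly_def fvar_def word_odd_def)
lemma odd_fvar: "is_odd_var x \<Longrightarrow> odd_fpoly (fvar x)"
  by (auto simp: odd_fpoly_def fvar_def word_odd_def)
lemma even_wd: "\<not> word_odd w \<Longrightarrow> even_fpoly (wd w)"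
  by (auto simp: even_fpoly_def wd_def)
lemma odd_wd: "word_odd w \<Longrightarrow> odd_fpoly (wd w)"
  by (auto simp: odd_fpoly_def wd_def)

lemma graded_subst_I:
  assumes "\<And>x. \<sigma> x \<in> fpolys"
    and "\<And>i. even_fpoly (\<sigma> (Yv i))" and "\<And>i. odd_fpoly (\<sigma> (Zv i))"
  shows "graded_subst \<sigma>"
  unfolding graded_subst_def using assms by (auto simp: is_odd_var_def split: var.split)

lemma fsubst_fvar_pair: "fsubst \<sigma> (fmul (fvar a) (fvar b)) = fmul (\<sigma> a) (\<sigma> (b::var)) " for \<sigma> :: "var \<Rightarrow> 'a::comm_ring_1 fpoly"
  by (simp add: fsubst_fmul fsubst_fvar)

lemma yswap_base: "fcomm (fY a) (fY b) \<in> (TT k :: 'a::comm_ring_1 fpoly set)"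
proof -
  define \<sigma> :: "var \<Rightarrow> 'a fpoly" where "\<sigma> x = (if x = Yv 1 then fY a else if x = Yv 2 then fY b else fvar x)" for x
  have g: "graded_subst \<sigma>"
    by (rule graded_subst_I) (auto simp: \<sigma>_def fY_def even_fvar odd_fvar is_odd_var_def)
  have "fcomm (fvar (Yv 1)) (fvar (Yv 2)) \<in> (TT k :: 'a fpoly set)" using TT_gen by (auto simp: Sgen_def)
  from TT_subst[OF g this] show ?thesis
    by (simp add: fsubst_fcomm fsubst_fvar \<sigma>_def)
qed

lemma Ym_swap: "Ym (u @ a # b # v) - Ym (u @ b # a # v) \<in> (TT k :: 'a::comm_ring_1 fpoly set)"
proof -
  have "(Ym (u @ a # b # v) :: 'a fpoly) - Ym (u @ b # a # v) = fmul (Ym u) (fmul (fcomm (fY a) (fY b)) (Ym v))"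
    by (simp add: Ym_append Ym_Cons fcomm_def fsub_eq fmul_diff_left fmul_diff_right fmul_assoc)
  moreover have "fmul (Ym u) (fmul (fcomm (fY a) (fY b)) (Ym v)) \<in> (TT k :: 'a fpoly set)"
    by (rule TT_mul_left[OF TT_mul_right[OF yswap_base]]) simp_all
  ultimately show ?thesis by simp
qed

lemma perm_rel:
  assumes refl: "\<And>x. R x x" and trans: "\<And>x y z. R x y \<Longrightarrow> R y z \<Longrightarrow> R x z"
    and cons: "\<And>c x y. R x y \<Longrightarrow> R (c # x) (c # y)"
    and swap: "\<And>u a b v. R (u @ a # b # v) (u @ b # a # v)"
  shows "mset xs = mset ys \<Longrightarrow> R xs ys"
proof (induction xs arbitrary: ys)
  case Nil
  then show ?case using refl by simp
next
  case (Cons x xs)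
  then have "x \<in> set ys" by (metis list.set_intros(1) set_mset_mset)
  then obtain ys1 ys2 where ys: "ys = ys1 @ x # ys2" by (meson split_list)
  have "mset xs = mset (ys1 @ ys2)" using Cons.prems ys by simp
  then have "R (x # xs) (x # ys1 @ ys2)" using Cons.IH cons by blast
  moreover have "R (x # zs1 @ zs2) (zs1 @ x # zs2)" for zs1 zs2
  proof (induction zs1)
    case Nil then show ?case using refl by simp
  next
    case (Cons c zs1)
    have "R (x # c # zs1 @ zs2) (c # x # zs1 @ zs2)" using swap[of "[]" x c] by simp
    moreover have "R (c # x # zs1 @ zs2) (c # zs1 @ x # zs2)" using cons Cons.IH by blast
    ultimately show ?case using trans by simp
  qed
  ultimately show ?case using trans ys by blast
qed

lemma Ym_perm: "mset l = mset l' \<Longrightarrow> Ym l - Ym l' \<in> (TT k :: 'a::comm_ring_1 fpoly set)"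
proof (rule perm_rel[where R = "\<lambda>l l'. Ym l - Ym l' \<in> (TT k :: 'a fpoly set)"])
  show "Ym x - Ym x \<in> (TT k :: 'a fpoly set)" for x using TT_zero by simp
  show "Ym x - Ym z \<in> (TT k :: 'a fpoly set)"
    if "Ym x - Ym y \<in> (TT k :: 'a fpoly set)" "Ym y - Ym z \<in> (TT k :: 'a fpoly set)" for x y z
    using TT_add[OF that] by simp
  show "Ym (c # x) - Ym (c # y) \<in> (TT k :: 'a fpoly set)" if "Ym x - Ym y \<in> (TT k :: 'a fpoly set)" for c x y
    using TT_mul_left[OF that, of "fY c"] by (simp add: Ym_Cons fmul_diff_right)
  show "Ym (u @ a # b # v) - Ym (u @ b # a # v) \<in> (TT k :: 'a fpoly set)" for u a b v
    by (rule Ym_swap)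
qed

lemma fcomm_list_append: "fcomm_list X (u @ v) = fcomm_list (fcomm_list X u) v"
  by (simp add: fcomm_list_def)
lemma fcomm_list_Cons: "fcomm_list X (c # v) = fcomm_list (fcomm X c) v"
  by (simp add: fcomm_list_def)

lemma C_swap:
  assumes X: "X \<in> fpolys"
  shows "fcomm_list X (map fY (u @ a # b # v)) - fcomm_list X (map fY (u @ b # a # v)) \<in> (TT k :: 'a::comm_ring_1 fpoly set)"
proof -
  define X' where "X' = fcomm_list X (map fY u)"
  have X': "X' \<in> fpolys" unfolding X'_def using X by (intro fpolys_fcomm_list) auto
  have "fcomm_list X (map fY (u @ a # b # v)) - fcomm_list X (map fY (u @ b # a # v))
      = fcomm_list (fcomm (fcomm X' (fY a)) (fY b)) (map fY v) - fcomm_list (fcomm (fcomm X' (fY b)) (fY a)) (map fY v)"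
    by (simp add: X'_def fcomm_list_append fcomm_list_Cons)
  also have "\<dots> = fcomm_list (fcomm (fcomm X' (fY a)) (fY b) - fcomm (fcomm X' (fY b)) (fY a)) (map fY v)"
    using X' by (intro fcomm_list_diff) (auto intro!: fpolys_fcomm)
  also have "\<dots> = fcomm_list (fmul X' (fcomm (fY a) (fY b)) - fmul (fcomm (fY a) (fY b)) X') (map fY v)"
    by (simp only: jacobi_swap)
  moreover have "fcomm_list (fmul X' (fcomm (fY a) (fY b)) - fmul (fcomm (fY a) (fY b)) X') (map fY v) \<in> (TT k :: 'a fpoly set)"
    by (intro TT_fcomm_list TT_diff TT_mul_left[OF yswap_base] TT_mul_right[OF yswap_base] X' set_map_fY)
  ultimately show ?thesis by simp
qed

lemma C_perm_all: "mset l = mset l' \<Longrightarrow>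
   \<forall>X\<in>fpolys. fcomm_list X (map fY l) - fcomm_list X (map fY l') \<in> (TT k :: 'a::comm_ring_1 fpoly set)"
proof (rule perm_rel[where R = "\<lambda>l l'. \<forall>X\<in>fpolys. fcomm_list X (map fY l) - fcomm_list X (map fY l') \<in> (TT k :: 'a fpoly set)"])
  show "\<forall>X\<in>fpolys. fcomm_list X (map fY x) - fcomm_list X (map fY x) \<in> (TT k :: 'a fpoly set)" for x
    by (simp add: TT_zero)
  show "\<forall>X\<in>fpolys. fcomm_list X (map fY x) - fcomm_list X (map fY z) \<in> (TT k :: 'a fpoly set)"
    if "\<forall>X\<in>fpolys. fcomm_list X (map fY x) - fcomm_list X (map fY y) \<in> (TT k :: 'a fpoly set)"
       "\<forall>X\<in>fpolys. fcomm_list X (map fY y) - fcomm_list X (map fY z) \<in> (TT k :: 'a fpoly set)" for x y z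
  proof
    fix X :: "'a fpoly" assume "X \<in> fpolys"
    then show "fcomm_list X (map fY x) - fcomm_list X (map fY z) \<in> TT k"
      using TT_add[of "fcomm_list X (map fY x) - fcomm_list X (map fY y)" k "fcomm_list X (map fY y) - fcomm_list X (map fY z)"]
        that by simp
  qed
  show "\<forall>X\<in>fpolys. fcomm_list X (map fY (c # x)) - fcomm_list X (map fY (c # y)) \<in> (TT k :: 'a fpoly set)"
    if "\<forall>X\<in>fpolys. fcomm_list X (map fY x) - fcomm_list X (map fY y) \<in> (TT k :: 'a fpoly set)" for c x y
  proof
    fix X :: "'a fpoly" assume "X \<in> fpolys"
    then have "fcomm X (fY c) \<in> fpolys" by (intro fpolys_fcomm) auto
    then show "fcomm_list X (map fY (c # x)) - fcomm_list X (map fY (c # y)) \<in> TT k"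
      using that by (simp add: fcomm_list_Cons)
  qed
  show "\<forall>X\<in>fpolys. fcomm_list X (map fY (u @ a # b # v)) - fcomm_list X (map fY (u @ b # a # v)) \<in> (TT k :: 'a fpoly set)" for u a b v
    using C_swap by blast
qed

lemma C_perm: "mset l = mset l' \<Longrightarrow> X \<in> fpolys \<Longrightarrow>
   fcomm_list X (map fY l) - fcomm_list X (map fY l') \<in> (TT k :: 'a::comm_ring_1 fpoly set)"
  using C_perm_all by blast

lemma map_nth_take: "d \<le> length B \<Longrightarrow> map (\<lambda>i. B ! (i - 1)) [1..<Suc d] = take d B"
  by (rule nth_equalityI) (auto simp del: upt_Suc)

lemma C_long:
  assumes k: "k \<ge> 3" and B: "length B \<ge> k - 2"
  shows "Cz j B \<in> (TT k :: 'a::comm_ring_1 fpoly set)"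
proof -
  define d where "d = k - 2"
  define \<sigma> :: "var \<Rightarrow> 'a fpoly" where
    "\<sigma> x = (case x of Zv i \<Rightarrow> if i = 0 then fvar (Zv j) else fvar (Zv i)
              | Yv i \<Rightarrow> if 1 \<le> i \<and> i \<le> d then fY (B ! (i - 1)) else fvar (Yv i))" for x
  have g: "graded_subst \<sigma>"
    by (rule graded_subst_I) (auto simp: \<sigma>_def fY_def even_fvar odd_fvar is_odd_var_def split: var.split)
  have gen: "fcomm_list (fvar (Zv 0)) (map (\<lambda>i. fvar (Yv i)) [1..<k - 1]) \<in> (TT k :: 'a fpoly set)"
    using TT_gen by (auto simp: Sgen_def)
  have kd: "k - 1 = Suc d" using k by (simp add: d_def)
  have "fsubst \<sigma> (fcomm_list (fvar (Zv 0)) (map (\<lambda>i. fvar (Yv i)) [1..<k - 1]))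
      = fcomm_list (fvar (Zv j)) (map (\<lambda>i. \<sigma> (Yv i)) [1..<k - 1])"
    by (subst fsubst_fcomm_list) (auto simp: fsubst_fvar \<sigma>_def o_def)
  also have "map (\<lambda>i. \<sigma> (Yv i)) [1..<k - 1] = map fY (map (\<lambda>i. B ! (i - 1)) [1..<Suc d])"
    unfolding kd by (auto simp: \<sigma>_def)
  also have "\<dots> = map fY (take d B)"
  proof -
    have dB: "d \<le> length B" using B by (simp add: d_def)
    show ?thesis by (simp only: map_nth_take[OF dB])
  qed
  finally have "fcomm_list (fvar (Zv j)) (map fY (take d B)) \<in> (TT k :: 'a fpoly set)"
    using TT_subst[OF g gen] by simp
  then have "fcomm_list (fcomm_list (fvar (Zv j)) (map fY (take d B))) (map fY (drop d B)) \<in> (TT k :: 'a fpoly set)"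
    by (rule TT_fcomm_list) (rule set_map_fY)
  then show ?thesis by (simp add: Cz_def fcomm_list_append[symmetric] map_append[symmetric])
qed

fun yw :: "var list \<Rightarrow> nat list option" where
  "yw [] = Some []"
| "yw (Yv i # w) = map_option (Cons i) (yw w)"
| "yw (Zv j # w) = None"

lemma yw_Some: "yw w = Some vs \<Longrightarrow> w = map Yv vs"
  by (induction w arbitrary: vs rule: yw.induct) auto

lemma yw_None: "yw w = None \<Longrightarrow> \<exists>vs j rest. w = map Yv vs @ Zv j # rest"
proof (induction w rule: yw.induct)
  case (2 i w)
  then obtain vs j rest where "w = map Yv vs @ Zv j # rest" by auto
  then have "Yv i # w = map Yv (i # vs) @ Zv j # rest" by simp
  then show ?case by blast
next
  case (3 j w)
  have "Zv j # w = map Yv [] @ Zv j # w" by simp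
  then show ?case by blast
qed simp

lemma two_odd: "wd (Zv j # map Yv vs @ Zv j' # rest) \<in> (TT k :: 'a::comm_ring_1 fpoly set)"
proof -
  define \<sigma> :: "var \<Rightarrow> 'a fpoly" where
    "\<sigma> x = (if x = Zv 1 then wd (Zv j # map Yv vs) else if x = Zv 2 then fvar (Zv j') else fvar x)" for x
  have wo: "word_odd (Zv j # map Yv vs)"
    by (simp add: word_odd_def is_odd_var_def filter_empty_conv)
  have g: "graded_subst \<sigma>"
    by (rule graded_subst_I) (auto simp: \<sigma>_def even_fvar odd_fvar is_odd_var_def odd_wd wo)
  have gen: "fmul (fvar (Zv 1)) (fvar (Zv 2)) \<in> (TT k :: 'a fpoly set)"
    using TT_gen by (auto simp: Sgen_def)
  have "fmul (wd (Zv j # map Yv vs)) (fvar (Zv j')) \<in> (TT k :: 'a fpoly set)"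
    using TT_subst[OF g gen] by (simp add: fsubst_fvar_pair \<sigma>_def)
  then have "fmul (fmul (wd (Zv j # map Yv vs)) (fvar (Zv j'))) (wd rest) \<in> (TT k :: 'a fpoly set)"
    by (rule TT_mul_right) simp
  moreover have "(wd (Zv j # map Yv vs @ Zv j' # rest) :: 'a fpoly)
      = fmul (fmul (wd (Zv j # map Yv vs)) (fvar (Zv j'))) (wd rest)"
    by (simp add: wd_Cons wd_append fmul_assoc)
  ultimately show ?thesis by simp
qed

fun expd :: "nat list \<Rightarrow> (nat list \<times> nat list) list" where
  "expd [] = [([], [])]"
| "expd (y # v) = map (\<lambda>p. (fst p, y # snd p)) (expd v) @ map (\<lambda>p. (y # fst p, snd p)) (expd v)"

lemma sum_list_map_append: "sum_list (map f (xs @ ys)) = sum_list (map f xs) + sum_list (map f ys)"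
  by simp

lemma expand:
  "X \<in> fpolys \<Longrightarrow> fmul X (Ym vs) = sum_list (map (\<lambda>p. fmul (Ym (fst p)) (fcomm_list X (map fY (snd p)))) (expd vs))"
  for X :: "'a::comm_ring_1 fpoly"
proof (induction vs arbitrary: X)
  case Nil
  then show ?case by (simp add: Ym_Nil fcomm_list_def)
next
  case (Cons y vs)
  have cX: "fcomm X (fY y) \<in> fpolys" using Cons.prems by (intro fpolys_fcomm) auto
  have sp: "fmul X (fY y) = fcomm X (fY y) + fmul (fY y) X" by (rule fmul_comm_split)
  have "fmul X (Ym (y # vs)) = fmul (fmul X (fY y)) (Ym vs)"
    by (simp add: Ym_Cons fmul_assoc)
  also have "\<dots> = fmul (fcomm X (fY y)) (Ym vs) + fmul (fY y) (fmul X (Ym vs))"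
    unfolding sp by (simp add: fmul_add_left fmul_assoc)
  also have "fmul (fcomm X (fY y)) (Ym vs)
      = sum_list (map (\<lambda>p. fmul (Ym (fst p)) (fcomm_list X (map fY (snd p)))) (map (\<lambda>p. (fst p, y # snd p)) (expd vs)))"
    by (simp add: Cons.IH[OF cX] fcomm_list_Cons o_def)
  also have "fmul (fY y) (fmul X (Ym vs))
      = sum_list (map (\<lambda>p. fmul (Ym (fst p)) (fcomm_list X (map fY (snd p)))) (map (\<lambda>p. (y # fst p, snd p)) (expd vs)))"
    by (simp add: Cons.IH[OF Cons.prems] fmul_sum_list_right o_def Ym_Cons fmul_assoc)
  finally show ?case by simp
qed


type_synonym key = "nat option \<times> nat multiset \<times> nat multiset"

fun kl :: "nat \<Rightarrow> var list \<Rightarrow> key list" where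
  "kl d [] = [(None, {#}, {#})]"
| "kl d (Yv i # w) = map (\<lambda>key. (fst key, add_mset i (fst (snd key)), snd (snd key))) (kl d w)"
| "kl d (Zv j # w) = (case yw w of None \<Rightarrow> []
      | Some vs \<Rightarrow> map (\<lambda>p. (Some j, mset (fst p), mset (snd p))) (filter (\<lambda>p. length (snd p) < d) (expd vs)))"

definition nf :: "key \<Rightarrow> 'a::comm_ring_1 fpoly" where
  "nf key = fmul (Ym (sorted_list_of_multiset (fst (snd key))))
     (case fst key of None \<Rightarrow> fone | Some j \<Rightarrow> Cz j (sorted_list_of_multiset (snd (snd key))))"

definition NF :: "nat \<Rightarrow> var list \<Rightarrow> 'a::comm_ring_1 fpoly" where
  "NF d w = sum_list (map nf (kl d w))"

lemma fpolys_nf[simp]: "nf key \<in> fpolys"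
  by (auto simp: nf_def split: option.split)

lemma fpolys_NF[simp]: "NF d w \<in> fpolys"
  by (auto simp: NF_def intro!: fpolys_sum_list)

lemma TT_zero'[simp]: "(\<lambda>a. 0) \<in> TT k"
  using TT_zero by (simp add: zero_fun_def)

lemma sum_list_diff_TT:
  assumes "\<And>x. x \<in> set xs \<Longrightarrow> f x - g x \<in> TT k"
  shows "sum_list (map f xs) - sum_list (map g xs) \<in> (TT k :: 'a::comm_ring_1 fpoly set)"
  using assms
proof (induction xs)
  case Nil then show ?case by (simp add: TT_zero)
next
  case (Cons x xs)
  have eq: "sum_list (map f (x # xs)) - sum_list (map g (x # xs))
     = (f x - g x) + (sum_list (map f xs) - sum_list (map g xs))" by (simp add: algebra_simps)
  have h1: "f x - g x \<in> TT k" by (rule Cons.prems) simp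
  have h2: "sum_list (map f xs) - sum_list (map g xs) \<in> TT k" by (rule Cons.IH) (rule Cons.prems, simp)
  show ?case by (subst eq) (rule TT_add[OF h1 h2])
qed

lemma sum_list_filter_TT:
  assumes "\<And>x. x \<in> set xs \<Longrightarrow> P x \<Longrightarrow> f x - g x \<in> TT k"
    and "\<And>x. x \<in> set xs \<Longrightarrow> \<not> P x \<Longrightarrow> f x \<in> TT k"
  shows "sum_list (map f xs) - sum_list (map g (filter P xs)) \<in> (TT k :: 'a::comm_ring_1 fpoly set)"
  using assms
proof (induction xs)
  case Nil then show ?case by (simp add: TT_zero)
next
  case (Cons x xs)
  show ?case
  proof (cases "P x")
    case True
    have eq: "sum_list (map f (x # xs)) - sum_list (map g (filter P (x # xs)))
       = (f x - g x) + (sum_list (map f xs) - sum_list (map g (filter P xs)))" using True by (simp add: algebra_simps)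
    have h1: "f x - g x \<in> TT k" by (rule Cons.prems(1)) (simp_all add: True)
    have h2: "sum_list (map f xs) - sum_list (map g (filter P xs)) \<in> TT k"
      by (rule Cons.IH) (rule Cons.prems, simp_all)+
    show ?thesis by (subst eq) (rule TT_add[OF h1 h2])
  next
    case False
    have eq: "sum_list (map f (x # xs)) - sum_list (map g (filter P (x # xs)))
       = f x + (sum_list (map f xs) - sum_list (map g (filter P xs)))" using False by (simp add: algebra_simps)
    have h1: "f x \<in> TT k" by (rule Cons.prems(2)) (simp_all add: False)
    have h2: "sum_list (map f xs) - sum_list (map g (filter P xs)) \<in> TT k"
      by (rule Cons.IH) (rule Cons.prems, simp_all)+
    show ?thesis by (subst eq) (rule TT_add[OF h1 h2])
  qed
qed

lemma nf_addi: "fmul (fY i) (nf key) - nf (fst key, add_mset i (fst (snd key)), snd (snd key)) \<in> (TT k :: 'a::comm_ring_1 fpoly set)"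
proof -
  obtain o1 \<mu> \<nu> where key: "key = (o1, \<mu>, \<nu>)" by (rule prod_cases3)
  define Z :: "'a fpoly" where "Z = (case o1 of None \<Rightarrow> fone | Some j \<Rightarrow> Cz j (sorted_list_of_multiset \<nu>))"
  have Z: "Z \<in> fpolys" by (auto simp: Z_def split: option.split)
  have "fmul (fY i) (nf key) - nf (fst key, add_mset i (fst (snd key)), snd (snd key))
     = fmul (Ym (i # sorted_list_of_multiset \<mu>) - Ym (sorted_list_of_multiset (add_mset i \<mu>))) Z"
    unfolding key nf_def Z_def by (simp only: fst_conv snd_conv Ym_Cons fmul_assoc fmul_diff_left)
  also have "\<dots> \<in> TT k"
    by (intro TT_mul_right Z Ym_perm) simp
  finally show ?thesis .
qed

lemma wd_NF:
  assumes k: "k \<ge> 3"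
  shows "wd w - NF (k - 2) w \<in> (TT k :: 'a::comm_ring_1 fpoly set)"
proof (induction w)
  case Nil
  then show ?case by (simp add: NF_def nf_def Ym_Nil wd_Nil TT_zero)
next
  case (Cons x w)
  show ?case
  proof (cases x)
    case (Yv i)
    have "wd (x # w) - NF (k - 2) (x # w)
       = fmul (fY i) (wd w - NF (k - 2) w)
         + (sum_list (map (\<lambda>key. fmul (fY i) (nf key)) (kl (k - 2) w))
            - sum_list (map (\<lambda>key. nf (fst key, add_mset i (fst (snd key)), snd (snd key))) (kl (k - 2) w)))"
      by (simp add: Yv NF_def wd_Cons fY_def fmul_diff_right fmul_sum_list_right o_def)
    also have "\<dots> \<in> (TT k :: 'a fpoly set)"
      by (intro TT_add TT_mul_left Cons.IH sum_list_diff_TT nf_addi) simp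
    finally show ?thesis .
  next
    case (Zv j)
    show ?thesis
    proof (cases "yw w")
      case None
      then obtain vs j' rest where "w = map Yv vs @ Zv j' # rest" using yw_None by blast
      then show ?thesis using None Zv two_odd by (simp add: NF_def)
    next
      case (Some vs)
      have w: "w = map Yv vs" using yw_Some[OF Some] .
      have "(wd (x # w) :: 'a fpoly) = fmul (fvar (Zv j)) (Ym vs)"
        by (simp add: Zv w wd_Cons Ym_def)
      also have "\<dots> = sum_list (map (\<lambda>p. fmul (Ym (fst p)) (Cz j (snd p))) (expd vs))"
        by (simp add: expand Cz_def)
      finally have e: "(wd (x # w) :: 'a fpoly) = sum_list (map (\<lambda>p. fmul (Ym (fst p)) (Cz j (snd p))) (expd vs))" .
      have n: "(NF (k - 2) (x # w) :: 'a fpoly)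
         = sum_list (map (\<lambda>p. nf (Some j, mset (fst p), mset (snd p))) (filter (\<lambda>p. length (snd p) < k - 2) (expd vs)))"
        by (simp add: NF_def Zv Some o_def)
      have "sum_list (map (\<lambda>p. fmul (Ym (fst p)) (Cz j (snd p))) (expd vs))
         - sum_list (map (\<lambda>p. nf (Some j, mset (fst p), mset (snd p))) (filter (\<lambda>p. length (snd p) < k - 2) (expd vs)))
         \<in> (TT k :: 'a fpoly set)"
      proof (rule sum_list_filter_TT)
        fix p :: "nat list \<times> nat list"
        show "fmul (Ym (fst p)) (Cz j (snd p)) \<in> (TT k :: 'a fpoly set)" if "\<not> length (snd p) < k - 2"
          using that k by (intro TT_mul_left C_long) auto
        define A where "A = sorted_list_of_multiset (mset (fst p))"
        define B where "B = sorted_list_of_multiset (mset (snd p))"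
        have "fmul (Ym (fst p)) (Cz j (snd p)) - nf (Some j, mset (fst p), mset (snd p))
            = fmul (Ym (fst p) - Ym A) (Cz j (snd p)) + fmul (Ym A) (Cz j (snd p) - Cz j B)"
          by (simp add: nf_def A_def B_def fmul_diff_left fmul_diff_right)
        also have "\<dots> \<in> (TT k :: 'a fpoly set)"
        proof (rule TT_add)
          show "fmul (Ym (fst p) - Ym A) (Cz j (snd p)) \<in> (TT k :: 'a fpoly set)"
            by (rule TT_mul_right[OF Ym_perm]) (simp_all add: A_def)
          show "fmul (Ym A) (Cz j (snd p) - Cz j B) \<in> (TT k :: 'a fpoly set)"
            unfolding Cz_def by (rule TT_mul_left[OF C_perm]) (simp_all add: B_def)
        qed
        finally show "fmul (Ym (fst p)) (Cz j (snd p)) - nf (Some j, mset (fst p), mset (snd p)) \<in> (TT k :: 'a fpoly set)" .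
      qed
      then show ?thesis unfolding e n .
    qed
  qed
qed

lemma sum_list_count:
  assumes "finite X" "set xs \<subseteq> X"
  shows "sum_list (map g xs) = (\<Sum>x\<in>X. of_nat (count_list xs x) * (g x :: 'a::comm_semiring_1))"
  using assms(2)
proof (induction xs)
  case Nil then show ?case by simp
next
  case (Cons y xs)
  have "(\<Sum>x\<in>X. of_nat (count_list (y # xs) x) * g x)
      = (\<Sum>x\<in>X. (if x = y then g x else 0) + of_nat (count_list xs x) * g x)"
    by (intro sum.cong) (auto simp: algebra_simps)
  also have "\<dots> = g y + (\<Sum>x\<in>X. of_nat (count_list xs x) * g x)"
    using Cons.prems assms(1) by (simp add: sum.distrib sum.delta')
  finally show ?case using Cons by simp
qed

definition canon :: "nat \<Rightarrow> 'a::comm_semiring_1 fpoly \<Rightarrow> key \<Rightarrow> 'a" where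
  "canon d p key = (\<Sum>w\<in>fsupp p. p w * of_nat (count_list (kl d w) key))"

definition Kset :: "nat \<Rightarrow> 'a::comm_semiring_1 fpoly \<Rightarrow> key set" where
  "Kset d p = (\<Union>w\<in>fsupp p. set (kl d w))"

lemma finite_Kset: "p \<in> fpolys \<Longrightarrow> finite (Kset d p)"
  by (simp add: Kset_def fin_fsupp)

lemma regroup:
  assumes p: "p \<in> fpolys"
  shows "(\<Sum>w\<in>fsupp p. p w * sum_list (map g (kl d w))) = (\<Sum>key\<in>Kset d p. canon d p key * g key)"
proof -
  have "(\<Sum>w\<in>fsupp p. p w * sum_list (map g (kl d w)))
      = (\<Sum>w\<in>fsupp p. p w * (\<Sum>key\<in>Kset d p. of_nat (count_list (kl d w) key) * g key))"
    using finite_Kset[OF p] by (intro sum.cong refl, subst sum_list_count) (auto simp: Kset_def)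
  also have "\<dots> = (\<Sum>key\<in>Kset d p. \<Sum>w\<in>fsupp p. p w * of_nat (count_list (kl d w) key) * g key)"
    by (simp add: sum_distrib_left mult.assoc) (rule sum.swap)
  also have "\<dots> = (\<Sum>key\<in>Kset d p. canon d p key * g key)"
    by (simp add: canon_def sum_distrib_right)
  finally show ?thesis .
qed

lemma canon_notin: "key \<notin> Kset d p \<Longrightarrow> canon d p key = 0"
  by (auto simp: canon_def Kset_def count_list_0_iff intro!: sum.neutral)

lemma sum_list_apply: "sum_list (map f xs) u = sum_list (map (\<lambda>x. f x u) xs)"
  by (induction xs) auto

lemma NF_T:
  fixes p :: "'a::comm_ring_1 fpoly"
  assumes k: "k \<ge> 3" and p: "p \<in> fpolys" and c: "\<And>key. canon (k - 2) p key = 0"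
  shows "p \<in> TT k"
proof -
  have eq: "p - (\<Sum>w\<in>fsupp p. fsmult (p w) (NF (k - 2) w))
      = (\<Sum>w\<in>fsupp p. fsmult (p w) (wd w - NF (k - 2) w))"
  proof (rule ext)
    fix u
    have "p u = (\<Sum>w\<in>fsupp p. fsmult (p w) (wd w)) u" using fpoly_repr[OF p] by metis
    then show "(p - (\<Sum>w\<in>fsupp p. fsmult (p w) (NF (k - 2) w))) u
        = (\<Sum>w\<in>fsupp p. fsmult (p w) (wd w - NF (k - 2) w)) u"
      by (simp add: sum_fun_apply fsmult_def sum_subtractf algebra_simps)
  qed
  have inT: "(\<Sum>w\<in>fsupp p. fsmult (p w) (wd w - NF (k - 2) w)) \<in> TT k"
    by (intro TT_sum TT_smult wd_NF k)
  have z: "(\<Sum>w\<in>fsupp p. fsmult (p w) (NF (k - 2) w :: 'a fpoly)) = 0"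
  proof (rule ext)
    fix u
    have "(\<Sum>w\<in>fsupp p. fsmult (p w) (NF (k - 2) w :: 'a fpoly)) u
        = (\<Sum>w\<in>fsupp p. p w * sum_list (map (\<lambda>key. nf key u) (kl (k - 2) w)))"
      by (simp add: sum_fun_apply fsmult_def NF_def sum_list_apply)
    also have "\<dots> = (\<Sum>key\<in>Kset (k - 2) p. canon (k - 2) p key * nf key u)"
      by (rule regroup[OF p])
    also have "\<dots> = 0" by (simp add: c)
    finally show "(\<Sum>w\<in>fsupp p. fsmult (p w) (NF (k - 2) w :: 'a fpoly)) u = 0 u" by simp
  qed
  from inT eq z show ?thesis by simp
qed


definition mprod :: "(nat \<Rightarrow> 'a::comm_semiring_1) \<Rightarrow> nat multiset \<Rightarrow> 'a" where
  "mprod x \<mu> = prod_mset (image_mset x \<mu>)"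

lemma mprod_split: "mprod x \<mu> = mprod x {#i \<in># \<mu>. i \<noteq> v#} * x v ^ count \<mu> v"
proof -
  have "\<mu> = {#i \<in># \<mu>. i \<noteq> v#} + {#i \<in># \<mu>. i = v#}"
    using multiset_partition[of \<mu> "\<lambda>i. i \<noteq> v"] by simp
  then have "mprod x \<mu> = mprod x {#i \<in># \<mu>. i \<noteq> v#} * mprod x {#i \<in># \<mu>. i = v#}"
    unfolding mprod_def by (metis image_mset_union prod_mset.union)
  also have "mprod x {#i \<in># \<mu>. i = v#} = x v ^ count \<mu> v"
    by (simp add: mprod_def filter_eq_replicate_mset)
  finally show ?thesis .
qed

lemma mprod_upd: "v \<notin># \<mu> \<Longrightarrow> mprod (x(v := t)) \<mu> = mprod x \<mu>"
  unfolding mprod_def by (metis (mono_tags, lifting) fun_upd_other image_mset_cong)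

lemma pnz_aux:
  fixes c :: "nat multiset \<Rightarrow> 'a::{field_char_0}"
  shows "finite M \<Longrightarrow> (\<forall>\<mu>\<in>M. \<forall>i\<in>#\<mu>. i < N) \<Longrightarrow> (\<forall>x. (\<Sum>\<mu>\<in>M. c \<mu> * mprod x \<mu>) = 0)
    \<Longrightarrow> \<mu> \<in> M \<Longrightarrow> c \<mu> = 0"
proof (induction N arbitrary: M c \<mu>)
  case 0
  then have "M \<subseteq> {{#}}" by (auto simp: multiset_nonemptyE)
  then have M: "M = {{#}}" using 0 by auto
  then show ?case using 0 by (simp add: mprod_def)
next
  case (Suc N)
  define v where "v = N"
  define rest :: "nat multiset \<Rightarrow> nat multiset" where "rest \<mu> = {#i \<in># \<mu>. i \<noteq> v#}" for \<mu>
  have key: "(\<Sum>\<mu>\<in>{\<mu>\<in>M. count \<mu> v = e}. c \<mu> * mprod x (rest \<mu>)) = 0" for x e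
  proof -
    define Pol where "Pol = (\<Sum>\<mu>\<in>M. monom (c \<mu> * mprod x (rest \<mu>)) (count \<mu> v))"
    have "poly Pol t = 0" for t
    proof -
      have "poly Pol t = (\<Sum>\<mu>\<in>M. c \<mu> * mprod (x(v := t)) \<mu>)"
        unfolding Pol_def poly_sum poly_monom
      proof (intro sum.cong refl)
        fix \<mu> assume "\<mu> \<in> M"
        have "mprod (x(v := t)) \<mu> = mprod (x(v := t)) (rest \<mu>) * t ^ count \<mu> v"
          using mprod_split[of "x(v := t)" \<mu> v] by (simp add: rest_def)
        also have "mprod (x(v := t)) (rest \<mu>) = mprod x (rest \<mu>)"
          by (rule mprod_upd) (simp add: rest_def)
        finally have h: "mprod (x(v := t)) \<mu> = mprod x (rest \<mu>) * t ^ count \<mu> v" .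
        show "c \<mu> * mprod x (rest \<mu>) * t ^ count \<mu> v = c \<mu> * mprod (x(v := t)) \<mu>"
          by (simp only: h mult.assoc)
      qed
      also have "\<dots> = 0" using Suc.prems(3) by blast
      finally show ?thesis .
    qed
    then have "Pol = 0" using poly_all_0_iff_0 by blast
    then have "coeff Pol e = 0" by simp
    moreover have "coeff Pol e = (\<Sum>\<mu>\<in>M. if count \<mu> v = e then c \<mu> * mprod x (rest \<mu>) else 0)"
      unfolding Pol_def coeff_monom_sum by simp
    ultimately show ?thesis using Suc.prems(1) by (simp add: sum.inter_filter)
  qed
  define e where "e = count \<mu> v"
  define M' where "M' = rest ` {\<nu>\<in>M. count \<nu> v = e}"
  define c' where "c' \<nu> = c (\<nu> + replicate_mset e v)" for \<nu>
  have bk: "\<nu> = rest \<nu> + replicate_mset e v" if "\<nu> \<in> M" "count \<nu> v = e" for \<nu>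
    using multiset_partition[of \<nu> "\<lambda>i. i \<noteq> v"] that by (simp add: rest_def filter_eq_replicate_mset)
  have inj: "inj_on rest {\<nu>\<in>M. count \<nu> v = e}"
    by (rule inj_onI) (metis (mono_tags, lifting) bk mem_Collect_eq)
  have "c' (rest \<mu>) = 0"
  proof (rule Suc.IH[of M' c'])
    show "finite M'" using Suc.prems(1) by (simp add: M'_def)
    show "\<forall>\<mu>\<in>M'. \<forall>i\<in>#\<mu>. i < N"
      using Suc.prems(2) by (auto simp: M'_def rest_def v_def less_Suc_eq)
    show "\<forall>x. (\<Sum>\<mu>\<in>M'. c' \<mu> * mprod x \<mu>) = 0"
    proof
      fix x
      have "(\<Sum>\<nu>\<in>M'. c' \<nu> * mprod x \<nu>) = (\<Sum>\<nu>\<in>{\<nu>\<in>M. count \<nu> v = e}. c' (rest \<nu>) * mprod x (rest \<nu>))"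
        unfolding M'_def by (rule sum.reindex[OF inj, unfolded o_def])
      also have "\<dots> = (\<Sum>\<nu>\<in>{\<nu>\<in>M. count \<nu> v = e}. c \<nu> * mprod x (rest \<nu>))"
        by (intro sum.cong refl) (simp add: c'_def bk[symmetric])
      also have "\<dots> = 0" by (rule key)
      finally show "(\<Sum>\<nu>\<in>M'. c' \<nu> * mprod x \<nu>) = 0" .
    qed
    show "rest \<mu> \<in> M'" using Suc.prems(4) by (simp add: M'_def e_def)
  qed
  then show ?case using bk[of \<mu>] Suc.prems(4) by (simp add: c'_def e_def)
qed

lemma pnz:
  fixes c :: "nat multiset \<Rightarrow> 'a::{field_char_0}"
  assumes "finite M" "\<And>x. (\<Sum>\<mu>\<in>M. c \<mu> * mprod x \<mu>) = 0" "\<mu> \<in> M"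
  shows "c \<mu> = 0"
proof -
  define N where "N = Suc (Max (\<Union>\<mu>\<in>M. set_mset \<mu>))"
  have "\<forall>\<mu>\<in>M. \<forall>i\<in>#\<mu>. i < N"
    using assms(1) by (auto simp: N_def less_Suc_eq_le intro!: Max_ge)
  then show ?thesis using pnz_aux[OF assms(1) _ _ assms(3)] assms(2) by blast
qed

lemma pnz_inj:
  fixes c :: "'k \<Rightarrow> 'a::{field_char_0}"
  assumes "finite K" "inj_on f K" "\<And>x. (\<Sum>key\<in>K. c key * mprod x (f key)) = 0" "key \<in> K"
  shows "c key = 0"
proof -
  define c' where "c' \<mu> = c (the_inv_into K f \<mu>)" for \<mu>
  have "\<And>x. (\<Sum>\<mu>\<in>f ` K. c' \<mu> * mprod x \<mu>) = 0"
    using assms(3) by (simp add: sum.reindex[OF assms(2)] c'_def the_inv_into_f_f[OF assms(2)])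
  then have "c' (f key) = 0" using pnz[of "f ` K" c'] assms(1,4) by blast
  then show ?thesis by (simp add: c'_def the_inv_into_f_f[OF assms(2) assms(4)])
qed


lemma kl_yword: "kl d (map Yv is) = [(None, mset is, {#})]"
  by (induction "is") auto

lemma kl_nony: "yw w = None \<Longrightarrow> key \<in> set (kl d w) \<Longrightarrow> fst key \<noteq> None"
  by (induction w arbitrary: key rule: yw.induct) auto

lemma kl_some_size: "key \<in> set (kl d w) \<Longrightarrow> fst key = Some j \<Longrightarrow> size (snd (snd key)) < d"
  by (induction d w arbitrary: key rule: kl.induct) (auto split: option.splits)

lemma kl_none: "key \<in> set (kl d w) \<Longrightarrow> fst key = None \<Longrightarrow> \<exists>is. w = map Yv is \<and> key = (None, mset is, {#})"
proof (cases "yw w")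
  case None
  then show "key \<in> set (kl d w) \<Longrightarrow> fst key = None \<Longrightarrow> ?thesis" using kl_nony by blast
next
  case (Some vs)
  then have "w = map Yv vs" by (rule yw_Some)
  then show "key \<in> set (kl d w) \<Longrightarrow> fst key = None \<Longrightarrow> ?thesis" by (auto simp: kl_yword)
qed

lemma yw_None_Zv: "yw w = None \<Longrightarrow> \<exists>j. Zv j \<in> set w"
proof -
  assume "yw w = None"
  then obtain vs j rest where "w = map Yv vs @ Zv j # rest" using yw_None by blast
  then show ?thesis by auto
qed

lemma mw_zero_var: "x \<in> set w \<Longrightarrow> \<phi> x = 0 \<Longrightarrow> meval_word m \<phi> w = 0"
  by (induction w) auto

lemma mw_yword:
  assumes m: "m \<ge> 1" and L: "\<And>i. \<phi> (Yv i) = evenM m (L i)"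
  shows "meval_word m \<phi> (map Yv is) = evenM m (prod_list (map L is))"
  by (induction "is") (simp_all add: L midt_evenM[OF m] mmul_even_even[OF m])

lemma mmul_even_row0: "c < m \<Longrightarrow> mmul m (evenM m P) M 0 c = coeff P 0 * M 0 c"
  unfolding mmul_def by (simp, subst sum_single[of 0]) (auto simp: evenM_def)

lemma coeff_prod_const0: "coeff (prod_list (map (\<lambda>i. [:a i:]) is)) 0 = prod_list (map a is)"
  by (induction "is") simp_all

lemma coeff_prod_aa:
  "coeff (prod_list (map (\<lambda>i. [:a i, a i:]) is)) 0 = prod_list (map a is) \<and>
   coeff (prod_list (map (\<lambda>i. [:a i, a i:]) is)) 1 = of_nat (length is) * prod_list (map a is)"
  for a :: "nat \<Rightarrow> 'a::comm_semiring_1"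
  by (induction "is") (auto simp: coeff_pCons algebra_simps)

lemma coeff_prod_lin:
  "coeff (prod_list (map (\<lambda>i. [:a i, b i:]) vs)) r
   = sum_list (map (\<lambda>p. if length (snd p) = r then prod_list (map a (fst p)) * prod_list (map b (snd p)) else 0) (expd vs))"
  for a b :: "nat \<Rightarrow> 'a::comm_semiring_1"
proof (induction vs arbitrary: r)
  case Nil
  then show ?case by simp
next
  case (Cons y vs)
  define S where "S r = sum_list (map (\<lambda>p. if length (snd p) = r then prod_list (map a (fst p)) * prod_list (map b (snd p)) else 0) (expd vs))" for r
  have lhs: "coeff (prod_list (map (\<lambda>i. [:a i, b i:]) (y # vs))) r
      = a y * S r + (case r of 0 \<Rightarrow> 0 | Suc r' \<Rightarrow> b y * S r')"
    by (cases r) (simp_all add: Cons.IH S_def coeff_pCons)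
  have p1: "sum_list (map (\<lambda>p. if length (snd p) = r then prod_list (map a (fst p)) * prod_list (map b (snd p)) else 0)
        (map (\<lambda>p. (fst p, y # snd p)) (expd vs))) = (case r of 0 \<Rightarrow> 0 | Suc r' \<Rightarrow> b y * S r')"
  proof (cases r)
    case 0 then show ?thesis by (simp add: o_def)
  next
    case (Suc r')
    have "sum_list (map (\<lambda>p. if length (snd p) = r then prod_list (map a (fst p)) * prod_list (map b (snd p)) else 0)
        (map (\<lambda>p. (fst p, y # snd p)) (expd vs)))
      = sum_list (map (\<lambda>p. b y * (if length (snd p) = r' then prod_list (map a (fst p)) * prod_list (map b (snd p)) else 0)) (expd vs))"
      unfolding map_map o_def using Suc
      by (intro arg_cong[where f=sum_list] map_cong refl) (auto simp: mult_ac)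
    also have "\<dots> = b y * S r'" by (simp add: S_def sum_list_const_mult)
    finally show ?thesis using Suc by simp
  qed
  have p2: "sum_list (map (\<lambda>p. if length (snd p) = r then prod_list (map a (fst p)) * prod_list (map b (snd p)) else 0)
        (map (\<lambda>p. (y # fst p, snd p)) (expd vs))) = a y * S r"
  proof -
    have "sum_list (map (\<lambda>p. if length (snd p) = r then prod_list (map a (fst p)) * prod_list (map b (snd p)) else 0)
        (map (\<lambda>p. (y # fst p, snd p)) (expd vs)))
      = sum_list (map (\<lambda>p. a y * (if length (snd p) = r then prod_list (map a (fst p)) * prod_list (map b (snd p)) else 0)) (expd vs))"
      unfolding map_map o_def
      by (intro arg_cong[where f=sum_list] map_cong refl) (auto simp: mult_ac)
    also have "\<dots> = a y * S r" by (simp add: S_def sum_list_const_mult)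
    finally show ?thesis .
  qed
  show ?case using lhs p1 p2 by (simp add: add.commute)
qed

lemma mprod_mset: "mprod a (mset l) = prod_list (map a l)"
  by (simp add: mprod_def prod_mset_prod_list[symmetric])

lemma mprod_add: "mprod a (add_mset i \<mu>) = a i * mprod a \<mu>"
  by (simp add: mprod_def)

lemma sum_list_zero: "(\<And>x. x \<in> set xs \<Longrightarrow> f x = 0) \<Longrightarrow> sum_list (map f xs) = (0::'a::monoid_add)"
  by (induction xs) auto

definition phiA :: "nat \<Rightarrow> (nat \<Rightarrow> 'a::comm_ring_1) \<Rightarrow> var \<Rightarrow> 'a mat" where
  "phiA m a = (\<lambda>x. case x of Yv i \<Rightarrow> evenM m [:a i:] | Zv j \<Rightarrow> 0)"
definition phiB :: "nat \<Rightarrow> (nat \<Rightarrow> 'a::comm_ring_1) \<Rightarrow> (nat \<Rightarrow> 'a) \<Rightarrow> nat \<Rightarrow> var \<Rightarrow> 'a mat" where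
  "phiB m a b j0 = (\<lambda>x. case x of Yv i \<Rightarrow> evenM m [:a i, b i:] | Zv j \<Rightarrow> oddM m [:if j = j0 then 1 else 0:])"
definition phiC :: "nat \<Rightarrow> (nat \<Rightarrow> 'a::comm_ring_1) \<Rightarrow> var \<Rightarrow> 'a mat" where
  "phiC m a = (\<lambda>x. case x of Yv i \<Rightarrow> evenM m [:a i, a i:] | Zv j \<Rightarrow> 0)"

definition gA :: "(nat \<Rightarrow> 'a::comm_ring_1) \<Rightarrow> key \<Rightarrow> 'a" where
  "gA a key = (case fst key of None \<Rightarrow> mprod a (fst (snd key)) | Some j \<Rightarrow> 0)"
definition gB :: "(nat \<Rightarrow> 'a::comm_ring_1) \<Rightarrow> (nat \<Rightarrow> 'a) \<Rightarrow> nat \<Rightarrow> nat \<Rightarrow> key \<Rightarrow> 'a" where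
  "gB a b j0 r key = (case fst key of None \<Rightarrow> 0
     | Some j \<Rightarrow> if j = j0 \<and> size (snd (snd key)) = r then mprod a (fst (snd key)) * mprod b (snd (snd key)) else 0)"
definition gC :: "(nat \<Rightarrow> 'a::comm_ring_1) \<Rightarrow> key \<Rightarrow> 'a" where
  "gC a key = (case fst key of None \<Rightarrow> of_nat (size (fst (snd key))) * mprod a (fst (snd key)) | Some j \<Rightarrow> 0)"

lemma graded_phiA: "m \<ge> 2 \<Longrightarrow> graded_eval m (phiA m a)"
  by (simp add: graded_eval_def phiA_def evenM_Neven oddM_Nodd[of m 0, simplified])
lemma graded_phiB: "m \<ge> 2 \<Longrightarrow> graded_eval m (phiB m a b j0)"
  by (simp add: graded_eval_def phiB_def evenM_Neven oddM_Nodd oddM_Nodd[of m 0, simplified])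
lemma graded_phiC: "m \<ge> 2 \<Longrightarrow> graded_eval m (phiC m a)"
  by (simp add: graded_eval_def phiC_def evenM_Neven oddM_Nodd[of m 0, simplified])

lemma EA:
  assumes m: "m \<ge> 1"
  shows "meval_word m (phiA m a) w 0 0 = sum_list (map (gA a) (kl d w))"
proof (cases "yw w")
  case None
  then obtain j where "Zv j \<in> set w" using yw_None_Zv by blast
  then have "meval_word m (phiA m a) w = 0" by (rule mw_zero_var) (simp add: phiA_def)
  moreover have "sum_list (map (gA a) (kl d w)) = 0"
  proof (rule sum_list_zero)
    fix key assume "key \<in> set (kl d w)"
    then have "fst key \<noteq> None" using kl_nony[OF None] by blast
    then show "gA a key = 0" by (auto simp: gA_def split: option.split)
  qed
  ultimately show ?thesis by simp
next
  case (Some vs)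
  then have w: "w = map Yv vs" by (rule yw_Some)
  have "meval_word m (phiA m a) w = evenM m (prod_list (map (\<lambda>i. [:a i:]) vs))"
    unfolding w by (rule mw_yword[OF m]) (simp add: phiA_def)
  then show ?thesis by (simp add: w kl_yword gA_def evenM_def coeff_prod_const0 mprod_mset)
qed

lemma EC:
  assumes m: "m \<ge> 3"
  shows "meval_word m (phiC m a) w 1 2 = sum_list (map (gC a) (kl d w))"
proof (cases "yw w")
  case None
  then obtain j where "Zv j \<in> set w" using yw_None_Zv by blast
  then have "meval_word m (phiC m a) w = 0" by (rule mw_zero_var) (simp add: phiC_def)
  moreover have "sum_list (map (gC a) (kl d w)) = 0"
  proof (rule sum_list_zero)
    fix key assume "key \<in> set (kl d w)"
    then have "fst key \<noteq> None" using kl_nony[OF None] by blast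
    then show "gC a key = 0" by (auto simp: gC_def split: option.split)
  qed
  ultimately show ?thesis by simp
next
  case (Some vs)
  then have w: "w = map Yv vs" by (rule yw_Some)
  have "meval_word m (phiC m a) w = evenM m (prod_list (map (\<lambda>i. [:a i, a i:]) vs))"
    unfolding w by (rule mw_yword) (use m in \<open>simp_all add: phiC_def\<close>)
  then show ?thesis using m coeff_prod_aa[of a vs]
    by (simp add: w kl_yword gC_def evenM_def mprod_mset)
qed

lemma nodd_pos: "Zv j \<in> set w \<Longrightarrow> nodd w \<ge> 1"
  by (induction w) (auto simp: nodd_def is_odd_var_def split: var.splits)

lemma EB:
  fixes a b :: "nat \<Rightarrow> 'a::comm_ring_1"
  assumes m: "m \<ge> 2" and r: "r < d" "r + 1 < m"
  shows "meval_word m (phiB m a b j0) w 0 (r + 1) = sum_list (map (gB a b j0 r) (kl d w))"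
proof (induction w)
  case Nil
  then show ?case by (simp add: midt_def gB_def)
next
  case (Cons x w)
  have m1: "m \<ge> 1" using m by simp
  show ?case
  proof (cases x)
    case (Yv i)
    have "meval_word m (phiB m a b j0) (x # w) 0 (r + 1) = a i * meval_word m (phiB m a b j0) w 0 (r + 1)"
      using r by (simp add: Yv phiB_def mmul_even_row0)
    also have "\<dots> = sum_list (map (\<lambda>key. a i * gB a b j0 r key) (kl d w))"
      by (subst Cons.IH) (rule sum_list_const_mult[symmetric])
    also have "\<dots> = sum_list (map (gB a b j0 r) (kl d (x # w)))"
      unfolding Yv kl.simps map_map o_def
      by (intro arg_cong[where f=sum_list] map_cong refl) (auto simp: gB_def mprod_add mult_ac split: option.split)
    finally show ?thesis .
  next
    case (Zv j)
    have F: "gradedF m (phiB m a b j0)" by (rule graded_eval_F[OF m graded_phiB[OF m]])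
    show ?thesis
    proof (cases "yw w")
      case None
      then obtain j' where "Zv j' \<in> set w" using yw_None_Zv by blast
      then have "nodd (x # w) \<ge> 2" using nodd_pos[of j' w] Zv by simp
      then have "meval_word m (phiB m a b j0) (x # w) = 0" using mw_parity[OF m1 F, of "x # w"] by simp
      then show ?thesis using None Zv by simp
    next
      case (Some vs)
      then have w: "w = map Yv vs" by (rule yw_Some)
      define \<delta> :: 'a where "\<delta> = (if j = j0 then 1 else 0)"
      have "meval_word m (phiB m a b j0) w = evenM m (prod_list (map (\<lambda>i. [:a i, b i:]) vs))"
        unfolding w by (rule mw_yword[OF m1]) (simp add: phiB_def)
      then have "meval_word m (phiB m a b j0) (x # w) = oddM m ([:\<delta>:] * prod_list (map (\<lambda>i. [:a i, b i:]) vs))"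
        by (simp add: Zv phiB_def mmul_odd_even[OF m1] \<delta>_def)
      then have lhs: "meval_word m (phiB m a b j0) (x # w) 0 (r + 1)
          = \<delta> * sum_list (map (\<lambda>p. if length (snd p) = r then prod_list (map a (fst p)) * prod_list (map b (snd p)) else 0) (expd vs))"
        using r by (simp add: oddM_def coeff_prod_lin)
      have "sum_list (map (gB a b j0 r) (kl d (x # w)))
          = sum_list (map (\<lambda>p. gB a b j0 r (Some j, mset (fst p), mset (snd p))) (filter (\<lambda>p. length (snd p) < d) (expd vs)))"
        by (simp add: Zv Some o_def)
      also have "\<dots> = sum_list (map (\<lambda>p. gB a b j0 r (Some j, mset (fst p), mset (snd p))) (expd vs))"
        by (rule sum_list_map_filter) (use r in \<open>auto simp: gB_def\<close>)
      also have "\<dots> = sum_list (map (\<lambda>p. \<delta> * (if length (snd p) = r then prod_list (map a (fst p)) * prod_list (map b (snd p)) else 0)) (expd vs))"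
        by (intro arg_cong[where f=sum_list] map_cong refl) (auto simp: gB_def \<delta>_def mprod_mset)
      also have "\<dots> = \<delta> * sum_list (map (\<lambda>p. if length (snd p) = r then prod_list (map a (fst p)) * prod_list (map b (snd p)) else 0) (expd vs))"
        by (rule sum_list_const_mult)
      finally show ?thesis using lhs by simp
    qed
  qed
qed

lemma meval_regroup:
  assumes p: "p \<in> fpolys" and h: "\<And>w. meval_word m \<phi> w i j = sum_list (map g (kl d w))"
  shows "meval m \<phi> p i j = (\<Sum>key\<in>Kset d p. canon d p key * g key)"
  unfolding meval_def h by (rule regroup[OF p])


lemma Kset_key: "key \<in> Kset d p \<Longrightarrow> \<exists>w\<in>fsupp p. key \<in> set (kl d w)"
  by (auto simp: Kset_def)

lemma canon_None_zero:
  fixes p :: "'a::field_char_0 fpoly"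
  assumes p: "p \<in> fpolys" and key: "key \<in> Kset d p" "fst key = None"
    and h: "\<And>a. (\<Sum>key'\<in>Kset d p. canon d p key' * gA a key') = 0"
  shows "canon d p key = 0"
proof -
  define K0 where "K0 = {key' \<in> Kset d p. fst key' = None}"
  have K0form: "\<And>key'. key' \<in> K0 \<Longrightarrow> key' = (None, fst (snd key'), {#})"
    unfolding K0_def using kl_none Kset_key by fastforce
  have fin: "finite K0" using finite_Kset[OF p] by (simp add: K0_def)
  have inj: "inj_on (\<lambda>key'. fst (snd key')) K0"
    by (rule inj_onI) (metis K0form)
  have all: "(\<Sum>key'\<in>K0. canon d p key' * mprod a (fst (snd key'))) = 0" for a
  proof -
    have "(\<Sum>key'\<in>K0. canon d p key' * mprod a (fst (snd key'))) = (\<Sum>key'\<in>K0. canon d p key' * gA a key')"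
      by (intro sum.cong refl) (simp add: K0_def gA_def)
    also have "\<dots> = (\<Sum>key'\<in>Kset d p. canon d p key' * gA a key')"
      using finite_Kset[OF p] by (intro sum.mono_neutral_left) (auto simp: K0_def gA_def split: option.split)
    finally show ?thesis using h by simp
  qed
  show ?thesis by (rule pnz_inj[OF fin inj all]) (simp add: K0_def key)
qed

lemma canon_None_zero_C:
  fixes p :: "'a::field_char_0 fpoly"
  assumes p: "p \<in> fpolys" and p0: "p [] = 0" and key: "key \<in> Kset d p" "fst key = None"
    and h: "\<And>a. (\<Sum>key'\<in>Kset d p. canon d p key' * gC a key') = 0"
  shows "canon d p key = 0"
proof -
  define K0 where "K0 = {key' \<in> Kset d p. fst key' = None}"
  have K0form: "\<And>key'. key' \<in> K0 \<Longrightarrow> key' = (None, fst (snd key'), {#})"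
    unfolding K0_def using kl_none Kset_key by fastforce
  have fin: "finite K0" using finite_Kset[OF p] by (simp add: K0_def)
  have inj: "inj_on (\<lambda>key'. fst (snd key')) K0"
    by (rule inj_onI) (metis K0form)
  have "(\<Sum>key'\<in>K0. (canon d p key' * of_nat (size (fst (snd key')))) * mprod a (fst (snd key'))) = 0" for a
  proof -
    have "(\<Sum>key'\<in>K0. (canon d p key' * of_nat (size (fst (snd key')))) * mprod a (fst (snd key')))
        = (\<Sum>key'\<in>K0. canon d p key' * gC a key')"
      by (intro sum.cong refl) (simp add: K0_def gC_def mult.assoc)
    also have "\<dots> = (\<Sum>key'\<in>Kset d p. canon d p key' * gC a key')"
      using finite_Kset[OF p] by (intro sum.mono_neutral_left) (auto simp: K0_def gC_def split: option.split)
    finally show ?thesis using h by simp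
  qed
  then have z: "canon d p key * of_nat (size (fst (snd key))) = 0"
    using pnz_inj[OF fin inj, of "\<lambda>key'. canon d p key' * of_nat (size (fst (snd key')))"] key
    by (simp add: K0_def)
  have "size (fst (snd key)) \<noteq> 0"
  proof
    assume s: "size (fst (snd key)) = 0"
    obtain w where w: "w \<in> fsupp p" "key \<in> set (kl d w)" using Kset_key[OF key(1)] by blast
    then obtain "is" where "w = map Yv is" "key = (None, mset is, {#})" using kl_none key(2) by blast
    then have "w = []" using s by simp
    then show False using w p0 by (simp add: fsupp_def)
  qed
  then show ?thesis using z by simp
qed

definition enc :: "key \<Rightarrow> nat multiset" where
  "enc key = image_mset (\<lambda>i. 2 * i) (fst (snd key)) + image_mset (\<lambda>i. Suc (2 * i)) (snd (snd key))"

lemma enc_dec1: "image_mset (\<lambda>i. i div 2) (filter_mset even (enc key)) = fst (snd key)"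
  by (simp add: enc_def filter_mset_image_mset o_def image_mset.compositionality)

lemma enc_dec2: "image_mset (\<lambda>i. i div 2) (filter_mset odd (enc key)) = snd (snd key)"
  by (simp add: enc_def filter_mset_image_mset o_def image_mset.compositionality)

lemma mprod_enc: "mprod x (enc key) = mprod (\<lambda>i. x (2 * i)) (fst (snd key)) * mprod (\<lambda>i. x (Suc (2 * i))) (snd (snd key))"
  by (simp add: mprod_def enc_def image_mset.compositionality o_def)

lemma canon_Some_zero:
  fixes p :: "'a::field_char_0 fpoly"
  assumes p: "p \<in> fpolys" and key: "key \<in> Kset d p" "fst key = Some j0"
    and h: "\<And>a b. (\<Sum>key'\<in>Kset d p. canon d p key' * gB a b j0 (size (snd (snd key))) key') = 0"
  shows "canon d p key = 0"
proof -
  define r where "r = size (snd (snd key))"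
  define K1 where "K1 = {key' \<in> Kset d p. fst key' = Some j0 \<and> size (snd (snd key')) = r}"
  have fin: "finite K1" using finite_Kset[OF p] by (simp add: K1_def)
  have inj: "inj_on enc K1"
  proof (rule inj_onI)
    fix k1 k2 assume k: "k1 \<in> K1" "k2 \<in> K1" "enc k1 = enc k2"
    then have "fst (snd k1) = fst (snd k2)" "snd (snd k1) = snd (snd k2)"
      by (metis enc_dec1, metis enc_dec2)
    moreover have "fst k1 = fst k2" using k by (simp add: K1_def)
    ultimately show "k1 = k2" by (simp add: prod_eq_iff)
  qed
  have all: "(\<Sum>key'\<in>K1. canon d p key' * mprod x (enc key')) = 0" for x
  proof -
    define a where "a = (\<lambda>i. x (2 * i))"
    define b where "b = (\<lambda>i. x (Suc (2 * i)))"
    have "(\<Sum>key'\<in>K1. canon d p key' * mprod x (enc key')) = (\<Sum>key'\<in>K1. canon d p key' * gB a b j0 r key')"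
      by (intro sum.cong refl) (auto simp: K1_def gB_def mprod_enc a_def b_def)
    also have "\<dots> = (\<Sum>key'\<in>Kset d p. canon d p key' * gB a b j0 r key')"
      using finite_Kset[OF p] by (intro sum.mono_neutral_left) (auto simp: K1_def gB_def split: option.split)
    finally show ?thesis using h by (simp add: r_def)
  qed
  show ?thesis by (rule pnz_inj[OF fin inj all]) (simp add: K1_def r_def key)
qed

lemma canon_all_zero_IdN:
  fixes p :: "'a::field_char_0 fpoly"
  assumes k: "k \<ge> 3" and p: "p \<in> IdN (k - 1)"
  shows "canon (k - 2) p key = 0"
proof -
  have pf: "p \<in> fpolys" and z: "\<And>\<phi>. graded_eval (k - 1) \<phi> \<Longrightarrow> meval (k - 1) \<phi> p = (\<lambda>i j. 0)"
    using p by (auto simp: IdN_def)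
  have n2: "k - 1 \<ge> 2" using k by simp
  show ?thesis
  proof (cases "key \<in> Kset (k - 2) p")
    case False then show ?thesis by (rule canon_notin)
  next
    case True
    show ?thesis
    proof (cases "fst key")
      case None
      show ?thesis
      proof (rule canon_None_zero[OF pf True None])
        fix a
        have "(\<Sum>key'\<in>Kset (k - 2) p. canon (k - 2) p key' * gA a key') = meval (k - 1) (phiA (k - 1) a) p 0 0"
          by (rule meval_regroup[OF pf EA, symmetric]) (use n2 in simp)
        also have "\<dots> = 0" using z[OF graded_phiA[OF n2]] by simp
        finally show "(\<Sum>key'\<in>Kset (k - 2) p. canon (k - 2) p key' * gA a key') = 0" .
      qed
    next
      case (Some j0)
      define r where "r = size (snd (snd key))"
      have r: "r < k - 2" using True Some kl_some_size Kset_key unfolding r_def by blast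
      show ?thesis
      proof (rule canon_Some_zero[OF pf True Some])
        fix a b
        have "(\<Sum>key'\<in>Kset (k - 2) p. canon (k - 2) p key' * gB a b j0 r key') = meval (k - 1) (phiB (k - 1) a b j0) p 0 (r + 1)"
          by (rule meval_regroup[OF pf EB, symmetric]) (use n2 r in simp_all)
        also have "\<dots> = 0" using z[OF graded_phiB[OF n2]] by simp
        finally show "(\<Sum>key'\<in>Kset (k - 2) p. canon (k - 2) p key' * gB a b j0 (size (snd (snd key))) key') = 0"
          by (simp add: r_def)
      qed
    qed
  qed
qed

lemma canon_all_zero_CN:
  fixes p :: "'a::field_char_0 fpoly"
  assumes k: "k \<ge> 3" and p: "p \<in> CN k"
  shows "canon (k - 2) p key = 0"
proof -
  have pf: "p \<in> fpolys" and p0: "p [] = 0" and z: "\<And>\<phi>. graded_eval k \<phi> \<Longrightarrow> meval k \<phi> p \<in> Ncenter k"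
    using p by (auto simp: CN_def)
  have k2: "k \<ge> 2" using k by simp
  show ?thesis
  proof (cases "key \<in> Kset (k - 2) p")
    case False then show ?thesis by (rule canon_notin)
  next
    case True
    show ?thesis
    proof (cases "fst key")
      case None
      show ?thesis
      proof (rule canon_None_zero_C[OF pf p0 True None])
        fix a
        have "(\<Sum>key'\<in>Kset (k - 2) p. canon (k - 2) p key' * gC a key') = meval k (phiC k a) p 1 2"
          by (rule meval_regroup[OF pf EC, symmetric]) (use k in simp)
        also have "\<dots> = 0" using center_entries(1)[OF k z[OF graded_phiC[OF k2]]] .
        finally show "(\<Sum>key'\<in>Kset (k - 2) p. canon (k - 2) p key' * gC a key') = 0" .
      qed
    next
      case (Some j0)
      define r where "r = size (snd (snd key))"
      have r: "r < k - 2" using True Some kl_some_size Kset_key unfolding r_def by blast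
      show ?thesis
      proof (rule canon_Some_zero[OF pf True Some])
        fix a b
        have "(\<Sum>key'\<in>Kset (k - 2) p. canon (k - 2) p key' * gB a b j0 r key') = meval k (phiB k a b j0) p 0 (r + 1)"
          by (rule meval_regroup[OF pf EB, symmetric]) (use k2 r in simp_all)
        also have "\<dots> = 0" using center_entries(2)[OF k z[OF graded_phiB[OF k2]], of "r + 1"] r by simp
        finally show "(\<Sum>key'\<in>Kset (k - 2) p. canon (k - 2) p key' * gB a b j0 (size (snd (snd key))) key') = 0"
          by (simp add: r_def)
      qed
    qed
  qed
qed


theorem theorem3p7:
  fixes k :: nat
  assumes "k \<ge> 3"
  shows "(CN k :: 'a::field_char_0 fpoly set) = IdN (k - 1)
       \<and> (IdN (k - 1) :: 'a fpoly set) =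
          T2_ideal {fcomm (fvar (Yv 1)) (fvar (Yv 2)),
                    fcomm_list (fvar (Zv 0)) (map (\<lambda>i. fvar (Yv i)) [1..<k - 1]),
                    fmul (fvar (Zv 1)) (fvar (Zv 2))}"
proof -
  have k: "k \<ge> 3" by (rule assms)
  have TT_eq: "TT k = T2_ideal {fcomm (fvar (Yv 1)) (fvar (Yv 2)),
                    fcomm_list (fvar (Zv 0)) (map (\<lambda>i. fvar (Yv i)) [1..<k - 1]),
                    fmul (fvar (Zv 1)) (fvar (Zv 2))}"
    by (simp add: TT_def Sgen_def)
  have A: "IdN (k - 1) \<subseteq> (TT k :: 'a fpoly set)"
  proof
    fix p :: "'a fpoly" assume p: "p \<in> IdN (k - 1)"
    show "p \<in> TT k"
      by (rule NF_T[OF k]) (use p canon_all_zero_IdN[OF k p] in \<open>auto simp: IdN_def\<close>)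
  qed
  have B: "CN k \<subseteq> (TT k :: 'a fpoly set)"
  proof
    fix p :: "'a fpoly" assume p: "p \<in> CN k"
    show "p \<in> TT k"
      by (rule NF_T[OF k]) (use p canon_all_zero_CN[OF k p] in \<open>auto simp: CN_def\<close>)
  qed
  have C1: "(TT k :: 'a fpoly set) \<subseteq> IdN (k - 1)"
    unfolding TT_def by (rule T_sub_IdN[OF k])
  have C2: "(TT k :: 'a fpoly set) \<subseteq> CN k"
    unfolding TT_def using T_sub_Jtop[OF k] Jtop_sub_CN[of k] k by auto
  have "IdN (k - 1) = (TT k :: 'a fpoly set)" using A C1 by blast
  moreover have "CN k = (TT k :: 'a fpoly set)" using B C2 by blast
  ultimately show ?thesis using TT_eq by simp
qed


end
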